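(* Let $\mathbb{F}$ be algebraically closed with $\operatorname{char}\mathbb{F}\ne2$, $G$ an abelian group, $h\in G$ of order 2, $\bar G=G/\langle h\rangle$, $\pi:G\to\bar G$ the quotient map, and $\chi:G\to\mathbb{F}^\times$ a character with $\chi(h)=-1$ (so $\chi^2$ is a character of $\bar G$). The $\bar G$-graded algebra $\mathcal{R}=\mathfrak{F}(\bar G,\mathcal{D},\widetilde V,\widetilde B,\bar g_0)$ with its antiautomorphism $\varphi$ satisfies $\varphi^2(r)=\chi^2(\bar g)r$ for all $r\in\mathcal{R}_{\bar g}$, $\bar g\in\bar G$, if and only if $\pi$ splits over the support $\bar T$ of $\mathcal{D}$ (so that $\chi^2$ is trivial on $\bar T$ and may be regarded as a character of $\bar G/\bar T$) and there exists $\mu_0\in\mathbb{F}^\times$ such that, for all $A\in\bar G/\bar T$, $\mu_A=\mu_0\chi^{-2}(A)\beta(\tau(A))$ if $\bar g_0A^2=\bar T$ and $\mu_A=\mu_0\chi^{-2}(A)$ if $\bar g_0A^2\ne\bar T$.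
   Context: $\mathcal{D}=M_\ell(\mathbb{F})$ with a division $\bar G$-grading (nonzero homogeneous elements invertible) whose support $\bar T$ is an elementary abelian 2-group, with homogeneous basis $X_t$ ($t\in\bar T$) such that matrix transpose $\varphi_0$ satisfies $\varphi_0(X_t)=\beta(t)X_t$, $\beta(t)\in\{\pm1\}$. "$\pi$ splits over $\bar T$" means $\pi^{-1}(\bar T)\cong\bar T\times\langle h\rangle$. $\bar g_0\in\bar G$; $\widetilde V$ is a vector space graded by $\bar G/\bar T$; $\widetilde B$ is a nondegenerate bilinear form on $\widetilde V$ with $\widetilde B(\widetilde V_A,\widetilde V_{A'})=0$ unless $\bar g_0AA'=\bar T$ and $\widetilde B(v,u)=\mu_A\widetilde B(u,v)$ for $u\in\widetilde V_A$, $v\in\widetilde V_{\bar g_0^{-1}A^{-1}}$, for some scalars $\mu_A\in\mathbb{F}^\times$. Choose $\gamma(A)\in A$ with $\bar g_0\gamma(A)\gamma(\bar g_0^{-1}A^{-1})=e$ whenever $\bar g_0A^2\ne\bar T$; $\tau(A)=\bar g_0\gamma(A)^2$ when $\bar g_0A^2=\bar T$. $V=\bigoplus_A\widetilde V_A\otimes\mathcal{D}$ with $\tilde v\otimes d$ of degree $\gamma(A)\deg d$; $B:V\times V\to\mathcal{D}$ is $B(u,v)=\widetilde B(u,v)X_{\tau(A)}$ for $u,v\in\widetilde V_A$, $\bar g_0A^2=\bar T$; $B(u,v)=\widetilde B(u,v)1$ for $u\in\widetilde V_A$, $v\in\widetilde V_{\bar g_0^{-1}A^{-1}}$, $\bar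 g_0A^2\ne\bar T$; zero on other pairs of components; extended by $B(ud,vd')=\varphi_0(d)B(u,v)d'$. $\mathcal{R}$ is the graded algebra spanned by operators $v\otimes u:x\mapsto vB(u,x)$ ($u,v$ homogeneous) and $\varphi$ is given by $B(ru,v)=B(u,\varphi(r)v)$. *)

theory Defs
  imports "HOL-Analysis.Analysis" "HOL-Algebra.Coset" "HOL-Computational_Algebra.Polynomial"
begin

definition alg_closed :: "'f::field itself \<Rightarrow> bool" where
  "alg_closed _ = (\<forall>p::'f poly. degree p \<ge> 1 \<longrightarrow> (\<exists>x. poly p x = 0))"

definition smat :: "'f::field \<Rightarrow> 'f^'n^'n \<Rightarrow> 'f^'n^'n" where
  "smat c M = (\<chi> i j. c * M $ i $ j)"

(* V = (direct sum over the homogeneous basis e_i of V~) of e_i \<otimes> D :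
   finitely supported functions 'i \<Rightarrow> M_l(F),  x = sum_i e_i \<otimes> x i *)
definition Vsp :: "('i \<Rightarrow> 'f::field^'n^'n) set" where
  "Vsp = {x. finite {i. x i \<noteq> 0}}"

(* homogeneous elements of V of degree a \<in> G-bar; e_i \<otimes> X_t has degree gam(dg i) t *)
definition Vhom :: "('g set) monoid \<Rightarrow> 'g set set \<Rightarrow> ('g set \<Rightarrow> 'f::field^'n^'n)
    \<Rightarrow> ('g set set \<Rightarrow> 'g set) \<Rightarrow> ('i \<Rightarrow> 'g set set) \<Rightarrow> 'g set \<Rightarrow> ('i \<Rightarrow> 'f^'n^'n) set" where
  "Vhom Gb Tb X gam dg a = {x \<in> Vsp. \<forall>i. x i = 0 \<or>
      (\<exists>t\<in>Tb. \<exists>c. gam (dg i) \<otimes>\<^bsub>Gb\<^esub> t = a \<and> x i = smat c (X t))}"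

(* B(e_i, e_j) \<in> D, following the definition of B *)
definition bhat :: "('g set) monoid \<Rightarrow> 'g set set \<Rightarrow> ('g set \<Rightarrow> 'f::field^'n^'n)
    \<Rightarrow> ('g set set \<Rightarrow> 'g set) \<Rightarrow> ('i \<Rightarrow> 'g set set) \<Rightarrow> 'g set \<Rightarrow> ('i \<Rightarrow> 'i \<Rightarrow> 'f)
    \<Rightarrow> 'i \<Rightarrow> 'i \<Rightarrow> 'f^'n^'n" where
  "bhat Gb Tb X gam dg g0 b i j =
    (let Q = Gb Mod Tb; g0c = Tb #>\<^bsub>Gb\<^esub> g0; A = dg i in
     if g0c \<otimes>\<^bsub>Q\<^esub> A \<otimes>\<^bsub>Q\<^esub> A = \<one>\<^bsub>Q\<^esub>
     then (if dg j = A then smat (b i j) (X (g0 \<otimes>\<^bsub>Gb\<^esub> gam A \<otimes>\<^bsub>Gb\<^esub> gam A)) else 0)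
     else (if dg j = inv\<^bsub>Q\<^esub> (g0c \<otimes>\<^bsub>Q\<^esub> A) then smat (b i j) (mat 1) else 0))"

(* B(x,y) = sum_{i,j} phi0(x i) B(e_i,e_j) (y j), phi0 = transpose *)
definition formB :: "('i \<Rightarrow> 'i \<Rightarrow> 'f::field^'n^'n) \<Rightarrow> ('i \<Rightarrow> 'f^'n^'n) \<Rightarrow> ('i \<Rightarrow> 'f^'n^'n) \<Rightarrow> 'f^'n^'n" where
  "formB bh x y = (\<Sum>i\<in>{i. x i \<noteq> 0}. \<Sum>j\<in>{j. y j \<noteq> 0}. transpose (x i) ** bh i j ** y j)"

(* the operator v \<otimes> u : x \<mapsto> v B(u,x) *)
definition rop :: "('i \<Rightarrow> 'i \<Rightarrow> 'f::field^'n^'n) \<Rightarrow> ('i \<Rightarrow> 'f^'n^'n) \<Rightarrow> ('i \<Rightarrow> 'f^'n^'n)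
    \<Rightarrow> ('i \<Rightarrow> 'f^'n^'n) \<Rightarrow> ('i \<Rightarrow> 'f^'n^'n)" where
  "rop bh v u = (\<lambda>x k. v k ** formB bh u x)"

definition opscale :: "'f::field \<Rightarrow> (('i \<Rightarrow> 'f^'n^'n) \<Rightarrow> ('i \<Rightarrow> 'f^'n^'n))
    \<Rightarrow> (('i \<Rightarrow> 'f^'n^'n) \<Rightarrow> ('i \<Rightarrow> 'f^'n^'n))" where
  "opscale c r = (\<lambda>x k. smat c (r x k))"

(* homogeneous component R_a of R: span of v \<otimes> u with u \<in> V_au, v \<in> V_av, g0 au av = a *)
definition Rdeg :: "('g set) monoid \<Rightarrow> 'g set set \<Rightarrow> ('g set \<Rightarrow> 'f::field^'n^'n)
    \<Rightarrow> ('g set set \<Rightarrow> 'g set) \<Rightarrow> ('i \<Rightarrow> 'g set set) \<Rightarrow> 'g set \<Rightarrow> ('i \<Rightarrow> 'i \<Rightarrow> 'f)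
    \<Rightarrow> 'g set \<Rightarrow> (('i \<Rightarrow> 'f^'n^'n) \<Rightarrow> ('i \<Rightarrow> 'f^'n^'n)) set" where
  "Rdeg Gb Tb X gam dg g0 b a = {r. \<exists>(n::nat) c u v au av.
     (\<forall>k<n. au k \<in> carrier Gb \<and> av k \<in> carrier Gb \<and>
            u k \<in> Vhom Gb Tb X gam dg (au k) \<and> v k \<in> Vhom Gb Tb X gam dg (av k) \<and>
            g0 \<otimes>\<^bsub>Gb\<^esub> au k \<otimes>\<^bsub>Gb\<^esub> av k = a) \<and>
     r = (\<lambda>x p. \<Sum>k<n. smat (c k) (rop (bhat Gb Tb X gam dg g0 b) (v k) (u k) x p))}"

definition Ralg :: "('g set) monoid \<Rightarrow> 'g set set \<Rightarrow> ('g set \<Rightarrow> 'f::field^'n^'n)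
    \<Rightarrow> ('g set set \<Rightarrow> 'g set) \<Rightarrow> ('i \<Rightarrow> 'g set set) \<Rightarrow> 'g set \<Rightarrow> ('i \<Rightarrow> 'i \<Rightarrow> 'f)
    \<Rightarrow> (('i \<Rightarrow> 'f^'n^'n) \<Rightarrow> ('i \<Rightarrow> 'f^'n^'n)) set" where
  "Ralg Gb Tb X gam dg g0 b = {r. \<exists>(n::nat) c u v au av.
     (\<forall>k<n. au k \<in> carrier Gb \<and> av k \<in> carrier Gb \<and>
            u k \<in> Vhom Gb Tb X gam dg (au k) \<and> v k \<in> Vhom Gb Tb X gam dg (av k)) \<and>
     r = (\<lambda>x p. \<Sum>k<n. smat (c k) (rop (bhat Gb Tb X gam dg g0 b) (v k) (u k) x p))}"

definition phiR :: "('g set) monoid \<Rightarrow> 'g set set \<Rightarrow> ('g set \<Rightarrow> 'f::field^'n^'n)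
    \<Rightarrow> ('g set set \<Rightarrow> 'g set) \<Rightarrow> ('i \<Rightarrow> 'g set set) \<Rightarrow> 'g set \<Rightarrow> ('i \<Rightarrow> 'i \<Rightarrow> 'f)
    \<Rightarrow> (('i \<Rightarrow> 'f^'n^'n) \<Rightarrow> ('i \<Rightarrow> 'f^'n^'n)) \<Rightarrow> (('i \<Rightarrow> 'f^'n^'n) \<Rightarrow> ('i \<Rightarrow> 'f^'n^'n))" where
  "phiR Gb Tb X gam dg g0 b r = (THE s. s \<in> Ralg Gb Tb X gam dg g0 b \<and>
     (\<forall>x\<in>Vsp. \<forall>y\<in>Vsp. formB (bhat Gb Tb X gam dg g0 b) (r x) y
                        = formB (bhat Gb Tb X gam dg g0 b) x (s y)))"

end

theory Submission
  imports Defs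
begin


lemma smat_nth[simp]: "smat c M $ i $ j = c * M $ i $ j"
  by (simp add: smat_def)

lemma smat_0[simp]: "smat 0 M = 0"
  by (simp add: vec_eq_iff)

lemma smat_zero[simp]: "smat c 0 = 0"
  by (simp add: vec_eq_iff)

lemma smat_1[simp]: "smat 1 M = M"
  by (simp add: vec_eq_iff)

lemma smat_smat: "smat c (smat d M) = smat (c * d) M"
  by (simp add: vec_eq_iff mult.assoc)

lemma smat_mult_l: "smat c A ** B = smat c (A ** B)"
  by (simp add: vec_eq_iff matrix_matrix_mult_def sum_distrib_left mult.assoc)

lemma smat_mult_r: "(A::'f::field^'n^'n) ** smat c B = smat c (A ** B)"
  by (simp add: vec_eq_iff matrix_matrix_mult_def sum_distrib_left mult_ac)

lemma transpose_smat: "transpose (smat c A) = smat c (transpose A)"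
  by (simp add: vec_eq_iff transpose_def)

lemma transpose_zero[simp]: "transpose 0 = 0"
  by (simp add: vec_eq_iff transpose_def)

lemma smat_sum: "smat c (\<Sum>k\<in>S. f k) = (\<Sum>k\<in>S. smat c (f k))"
proof (cases "finite S")
  case True then show ?thesis by (simp add: vec_eq_iff sum_distrib_left)
qed simp

lemma smat_diff: "smat c (A - B) = smat c A - smat c B"
  by (simp add: vec_eq_iff right_diff_distrib)

lemma smat_add: "smat c (A + B) = smat c A + smat c B"
  by (simp add: vec_eq_iff distrib_left)

lemma madd_rdistrib: "((A::'f::field^'n^'n) + B) ** C = A ** C + B ** C"
  by (simp add: vec_eq_iff matrix_matrix_mult_def distrib_right sum.distrib)

lemma sum_mmult_l: "(\<Sum>k\<in>S. f k) ** (B::'f^'n^'n) = (\<Sum>k\<in>S. f k ** B)" for f :: "'k \<Rightarrow> 'f::field^'n^'n"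
proof (induction S rule: infinite_finite_induct)
  case (insert x F)
  have "(\<Sum>k\<in>insert x F. f k) ** B = (f x + (\<Sum>k\<in>F. f k)) ** B" using insert by simp
  also have "\<dots> = f x ** B + (\<Sum>k\<in>F. f k) ** B" by (rule madd_rdistrib)
  finally show ?case using insert by simp
qed simp_all

lemma sum_mmult_r: "(A::'f^'n^'n) ** (\<Sum>k\<in>S. f k) = (\<Sum>k\<in>S. A ** f k)" for f :: "'k \<Rightarrow> 'f::field^'n^'n"
  by (induction S rule: infinite_finite_induct) (simp_all add: matrix_add_ldistrib)

lemma transpose_sum: "transpose (\<Sum>k\<in>S. f k) = (\<Sum>k\<in>S. transpose (f k))"
proof (cases "finite S")
  case True then show ?thesis by (simp add: vec_eq_iff transpose_def)
qed simp

lemma smat_eq_cancel: "smat c M = smat d M \<Longrightarrow> M \<noteq> 0 \<Longrightarrow> c = d"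
proof -
  assume e: "smat c M = smat d M" and nz: "M \<noteq> 0"
  obtain i j where "M $ i $ j \<noteq> 0" using nz by (metis vec_eq_iff zero_index)
  moreover have "c * M $ i $ j = d * M $ i $ j" using e by (metis smat_nth)
  ultimately show ?thesis by simp
qed

lemma invertible_ne0: "invertible (M::'f::field^'n^'n) \<Longrightarrow> M \<noteq> 0"
proof
  assume "invertible M" "M = 0"
  then obtain B where "M ** B = mat 1" unfolding invertible_def by blast
  then have "(0::'f^'n^'n) = mat 1" using \<open>M = 0\<close> by simp
  then have e: "(0::'f^'n^'n) = mat 1" by simp
  have "(0::'f^'n^'n) $ undefined $ undefined = (mat 1::'f^'n^'n) $ undefined $ undefined" by (simp only: e)
  then show False by (simp add: mat_def)
qed

lemma invertible_smat: "invertible (M::'f::field^'n^'n) \<Longrightarrow> c \<noteq> 0 \<Longrightarrow> invertible (smat c M)"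
proof -
  assume "invertible M" "c \<noteq> 0"
  then obtain B where B: "M ** B = mat 1" "B ** M = mat 1" unfolding invertible_def by blast
  have "smat c M ** smat (1/c) B = mat 1" using B \<open>c \<noteq> 0\<close> by (simp add: smat_mult_l smat_mult_r smat_smat)
  moreover have "smat (1/c) B ** smat c M = mat 1" using B \<open>c \<noteq> 0\<close> by (simp add: smat_mult_l smat_mult_r smat_smat)
  ultimately show ?thesis unfolding invertible_def by blast
qed

lemma invertible_mat1: "invertible (mat 1 :: 'f::field^'n^'n)"
  unfolding invertible_def by (rule exI[of _ "mat 1"]) simp


lemma formB_S:
  assumes fS: "finite S" and sx: "{i. x i \<noteq> 0} \<subseteq> S" and sy: "{j. y j \<noteq> 0} \<subseteq> S"
  shows "formB B x y = (\<Sum>i\<in>S. \<Sum>j\<in>S. transpose (x i) ** B i j ** y j)"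
proof -
  have inner: "(\<Sum>j\<in>{j. y j \<noteq> 0}. transpose (x i) ** B i j ** y j) = (\<Sum>j\<in>S. transpose (x i) ** B i j ** y j)" for i
    by (rule sum.mono_neutral_left[OF fS sy]) auto
  have "formB B x y = (\<Sum>i\<in>{i. x i \<noteq> 0}. \<Sum>j\<in>S. transpose (x i) ** B i j ** y j)"
    unfolding formB_def using inner by simp
  also have "\<dots> = (\<Sum>i\<in>S. \<Sum>j\<in>S. transpose (x i) ** B i j ** y j)"
    by (rule sum.mono_neutral_left[OF fS sx]) auto
  finally show ?thesis .
qed

lemma formB_inf: "infinite {j. y j \<noteq> 0} \<Longrightarrow> formB B x y = 0"
  unfolding formB_def by simp

lemma formB_L1:
  fixes w :: "nat \<Rightarrow> 'i \<Rightarrow> 'f::field^'n^'n"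
  assumes w: "\<forall>k<n. finite {p. w k p \<noteq> 0}" and y: "finite {j. y j \<noteq> 0}"
  shows "formB B (\<lambda>p. \<Sum>k<n. smat (c k) (w k p ** M k)) y
       = (\<Sum>k<n. smat (c k) (transpose (M k) ** formB B (w k) y))"
proof -
  define S where "S = {j. y j \<noteq> 0} \<union> (\<Union>k<n. {p. w k p \<noteq> 0})"
  have fS: "finite S" using w y by (auto simp: S_def)
  have s1: "{p. (\<Sum>k<n. smat (c k) (w k p ** M k)) \<noteq> 0} \<subseteq> S"
  proof
    fix p assume "p \<in> {p. (\<Sum>k<n. smat (c k) (w k p ** M k)) \<noteq> 0}"
    moreover have "(\<forall>k<n. w k p = 0) \<Longrightarrow> (\<Sum>k<n. smat (c k) (w k p ** M k)) = 0" by (auto intro!: sum.neutral)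
    ultimately have "\<not> (\<forall>k<n. w k p = 0)" by blast
    then show "p \<in> S" by (auto simp: S_def)
  qed
  have sw: "\<And>k. k < n \<Longrightarrow> {p. w k p \<noteq> 0} \<subseteq> S" by (auto simp: S_def)
  have sy: "{j. y j \<noteq> 0} \<subseteq> S" by (auto simp: S_def)
  have "formB B (\<lambda>p. \<Sum>k<n. smat (c k) (w k p ** M k)) y
      = (\<Sum>p\<in>S. \<Sum>j\<in>S. transpose (\<Sum>k<n. smat (c k) (w k p ** M k)) ** B p j ** y j)"
    by (rule formB_S[OF fS s1 sy])
  also have "\<dots> = (\<Sum>p\<in>S. \<Sum>j\<in>S. \<Sum>k<n. smat (c k) (transpose (M k) ** (transpose (w k p) ** B p j ** y j)))"
    by (simp add: transpose_sum transpose_smat matrix_transpose_mul sum_mmult_l smat_mult_l matrix_mul_assoc)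
  also have "\<dots> = (\<Sum>p\<in>S. \<Sum>k<n. \<Sum>j\<in>S. smat (c k) (transpose (M k) ** (transpose (w k p) ** B p j ** y j)))"
    by (rule sum.cong[OF refl], rule sum.swap)
  also have "\<dots> = (\<Sum>k<n. \<Sum>p\<in>S. \<Sum>j\<in>S. smat (c k) (transpose (M k) ** (transpose (w k p) ** B p j ** y j)))"
    by (rule sum.swap)
  also have "\<dots> = (\<Sum>k<n. smat (c k) (transpose (M k) ** (\<Sum>p\<in>S. \<Sum>j\<in>S. transpose (w k p) ** B p j ** y j)))"
    by (simp add: smat_sum sum_mmult_r)
  also have "\<dots> = (\<Sum>k<n. smat (c k) (transpose (M k) ** formB B (w k) y))"
    by (rule sum.cong[OF refl]) (simp add: formB_S[OF fS sw sy])
  finally show ?thesis .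
qed

lemma formB_L2:
  fixes w :: "nat \<Rightarrow> 'i \<Rightarrow> 'f::field^'n^'n"
  assumes w: "\<forall>k<n. finite {p. w k p \<noteq> 0}" and x: "finite {j. x j \<noteq> 0}"
  shows "formB B x (\<lambda>p. \<Sum>k<n. smat (c k) (w k p ** M k))
       = (\<Sum>k<n. smat (c k) (formB B x (w k) ** M k))"
proof -
  define S where "S = {j. x j \<noteq> 0} \<union> (\<Union>k<n. {p. w k p \<noteq> 0})"
  have fS: "finite S" using w x by (auto simp: S_def)
  have s1: "{p. (\<Sum>k<n. smat (c k) (w k p ** M k)) \<noteq> 0} \<subseteq> S"
  proof
    fix p assume "p \<in> {p. (\<Sum>k<n. smat (c k) (w k p ** M k)) \<noteq> 0}"
    moreover have "(\<forall>k<n. w k p = 0) \<Longrightarrow> (\<Sum>k<n. smat (c k) (w k p ** M k)) = 0" by (auto intro!: sum.neutral)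
    ultimately have "\<not> (\<forall>k<n. w k p = 0)" by blast
    then show "p \<in> S" by (auto simp: S_def)
  qed
  have sw: "\<And>k. k < n \<Longrightarrow> {p. w k p \<noteq> 0} \<subseteq> S" by (auto simp: S_def)
  have sx: "{j. x j \<noteq> 0} \<subseteq> S" by (auto simp: S_def)
  have "formB B x (\<lambda>p. \<Sum>k<n. smat (c k) (w k p ** M k))
      = (\<Sum>i\<in>S. \<Sum>j\<in>S. transpose (x i) ** B i j ** (\<Sum>k<n. smat (c k) (w k j ** M k)))"
    by (rule formB_S[OF fS sx s1])
  also have "\<dots> = (\<Sum>i\<in>S. \<Sum>j\<in>S. \<Sum>k<n. smat (c k) ((transpose (x i) ** B i j ** w k j) ** M k))"
    by (simp add: sum_mmult_r smat_mult_r matrix_mul_assoc)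
  also have "\<dots> = (\<Sum>i\<in>S. \<Sum>k<n. \<Sum>j\<in>S. smat (c k) ((transpose (x i) ** B i j ** w k j) ** M k))"
    by (rule sum.cong[OF refl], rule sum.swap)
  also have "\<dots> = (\<Sum>k<n. \<Sum>i\<in>S. \<Sum>j\<in>S. smat (c k) ((transpose (x i) ** B i j ** w k j) ** M k))"
    by (rule sum.swap)
  also have "\<dots> = (\<Sum>k<n. smat (c k) ((\<Sum>i\<in>S. \<Sum>j\<in>S. transpose (x i) ** B i j ** w k j) ** M k))"
    by (simp add: smat_sum sum_mmult_l)
  also have "\<dots> = (\<Sum>k<n. smat (c k) (formB B x (w k) ** M k))"
    by (rule sum.cong[OF refl]) (simp add: formB_S[OF fS sx sw])
  finally show ?thesis .
qed


lemma formB_smat_l: assumes d: "d \<noteq> 0"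
  shows "formB B (\<lambda>i. smat d (u i)) x = smat d (formB B u x)"
proof -
  have s: "{i. smat d (u i) \<noteq> 0} = {i. u i \<noteq> 0}"
  proof -
    have "smat d (u i) = 0 \<longleftrightarrow> u i = 0" for i
    proof
      assume "smat d (u i) = 0"
      then have "smat (1/d) (smat d (u i)) = 0" by simp
      then show "u i = 0" using d by (simp add: smat_smat)
    qed simp
    then show ?thesis by auto
  qed
  show ?thesis unfolding formB_def s
    by (simp add: smat_sum transpose_smat smat_mult_l)
qed

lemma formB_zero_l: "formB B (\<lambda>i. 0) x = 0"
  by (simp add: formB_def)



locale P51 =
  fixes G :: "('g, 'z) monoid_scheme"
    and h :: 'g
    and chi :: "'g \<Rightarrow> 'f::field"
    and Tb :: "'g set set"
    and X :: "'g set \<Rightarrow> 'f^'n^'n"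
    and beta :: "'g set \<Rightarrow> 'f"
    and g0 :: "'g set"
    and dg :: "'i \<Rightarrow> 'g set set"
    and b :: "'i \<Rightarrow> 'i \<Rightarrow> 'f"
    and mu :: "'g set set \<Rightarrow> 'f"
    and gam :: "'g set set \<Rightarrow> 'g set"
    and H :: "'g set" and Gb :: "'g set monoid" and Q :: "'g set set monoid" and g0c :: "'g set set"
  assumes H_def: "H = {\<one>\<^bsub>G\<^esub>, h}"
  and Gb_def: "Gb = G Mod H"
  and Q_def: "Q = Gb Mod Tb"
  and g0c_def: "g0c = Tb #>\<^bsub>Gb\<^esub> g0"
    and F_char: "(2::'f) \<noteq> 0"
    and G_ab: "comm_group G"
    and h_in: "h \<in> carrier G" and h_ne: "h \<noteq> \<one>\<^bsub>G\<^esub>" and h_sq: "h \<otimes>\<^bsub>G\<^esub> h = \<one>\<^bsub>G\<^esub>"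
    and chi_nz: "\<forall>a\<in>carrier G. chi a \<noteq> 0"
    and chi_mult: "\<forall>a\<in>carrier G. \<forall>c\<in>carrier G. chi (a \<otimes>\<^bsub>G\<^esub> c) = chi a * chi c"
    and chi_h: "chi h = -1"
    and Tb_sub: "subgroup Tb Gb"
    and Tb_el2: "\<forall>t\<in>Tb. t \<otimes>\<^bsub>Gb\<^esub> t = \<one>\<^bsub>Gb\<^esub>"
    and X_inv: "\<forall>t\<in>Tb. invertible (X t)"
    and X_transp: "\<forall>t\<in>Tb. transpose (X t) = smat (beta t) (X t)"
    and beta_pm: "\<forall>t\<in>Tb. beta t = 1 \<or> beta t = -1"
    and g0_in: "g0 \<in> carrier Gb"
    and dg_in: "\<forall>i. dg i \<in> carrier Q"
    and b_supp: "\<forall>i j. b i j \<noteq> 0 \<longrightarrow> g0c \<otimes>\<^bsub>Q\<^esub> dg i \<otimes>\<^bsub>Q\<^esub> dg j = \<one>\<^bsub>Q\<^esub>"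
    and b_nondeg: "\<forall>c::'i \<Rightarrow> 'f. finite {i. c i \<noteq> 0} \<and> (\<exists>i. c i \<noteq> 0) \<longrightarrow>
                      (\<exists>j. (\<Sum>i\<in>{i. c i \<noteq> 0}. c i * b i j) \<noteq> 0)"
    and mu_nz: "\<forall>A\<in>carrier Q. mu A \<noteq> 0"
    and b_mu: "\<forall>i j. dg j = inv\<^bsub>Q\<^esub> (g0c \<otimes>\<^bsub>Q\<^esub> dg i) \<longrightarrow> b j i = mu (dg i) * b i j"
    and gam_in: "\<forall>A\<in>carrier Q. gam A \<in> A"
begin

lemma G_grp: "comm_group G" by (rule G_ab)

sublocale GG: comm_group G by (rule G_ab)

lemma inv_h: "inv\<^bsub>G\<^esub> h = h"
  using GG.inv_equality[OF h_sq h_in h_in] .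

lemma H_sub: "subgroup H G"
proof
  show "H \<subseteq> carrier G" using h_in by (auto simp: H_def)
  show "\<And>x y. x \<in> H \<Longrightarrow> y \<in> H \<Longrightarrow> x \<otimes>\<^bsub>G\<^esub> y \<in> H" using h_in h_sq by (auto simp: H_def)
  show "\<one>\<^bsub>G\<^esub> \<in> H" by (simp add: H_def)
  show "\<And>x. x \<in> H \<Longrightarrow> inv\<^bsub>G\<^esub> x \<in> H" using inv_h by (auto simp: H_def)
qed

lemma Gb_comm: "comm_group Gb"
  unfolding Gb_def by (rule GG.abelian_FactGroup[OF H_sub])

sublocale GB: comm_group Gb by (rule Gb_comm)

lemma Q_comm: "comm_group Q"
  unfolding Q_def by (rule GB.abelian_FactGroup[OF Tb_sub])

sublocale QQ: comm_group Q by (rule Q_comm)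

lemma H_normal: "normal H G" by (rule GG.subgroup_imp_normal[OF H_sub])
lemma Tb_normal: "normal Tb Gb" by (rule GB.subgroup_imp_normal[OF Tb_sub])

lemma carrier_Gb: "carrier Gb = rcosets\<^bsub>G\<^esub> H" by (simp add: Gb_def FactGroup_def)
lemma carrier_Q: "carrier Q = rcosets\<^bsub>Gb\<^esub> Tb" by (simp add: Q_def FactGroup_def)
lemma mult_Gb: "x \<otimes>\<^bsub>Gb\<^esub> y = x <#>\<^bsub>G\<^esub> y" by (simp add: Gb_def)
lemma mult_Q: "x \<otimes>\<^bsub>Q\<^esub> y = x <#>\<^bsub>Gb\<^esub> y" by (simp add: Q_def)
lemma one_Gb: "\<one>\<^bsub>Gb\<^esub> = H" by (simp add: Gb_def)
lemma one_Q: "\<one>\<^bsub>Q\<^esub> = Tb" by (simp add: Q_def)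

lemma Gb_elem: "x \<in> carrier Gb \<Longrightarrow> \<exists>c\<in>carrier G. x = H #>\<^bsub>G\<^esub> c"
  by (auto simp: carrier_Gb RCOSETS_def)

lemma Gb_elem_sub: "x \<in> carrier Gb \<Longrightarrow> x \<subseteq> carrier G"
  using Gb_elem H_sub GG.r_coset_subset_G subgroup.subset by metis

lemma Gb_elem_ne: "x \<in> carrier Gb \<Longrightarrow> \<exists>g. g \<in> x"
  using Gb_elem H_sub GG.rcos_self by metis

lemma Gb_mem_mult: "g \<in> x \<Longrightarrow> g' \<in> y \<Longrightarrow> g \<otimes>\<^bsub>G\<^esub> g' \<in> x \<otimes>\<^bsub>Gb\<^esub> y"
  by (auto simp: mult_Gb set_mult_def)

lemma Gb_mult_mem: "g \<in> x \<otimes>\<^bsub>Gb\<^esub> y \<Longrightarrow> \<exists>a\<in>x. \<exists>c\<in>y. g = a \<otimes>\<^bsub>G\<^esub> c"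
  by (auto simp: mult_Gb set_mult_def)

lemma Q_elem: "A \<in> carrier Q \<Longrightarrow> a \<in> A \<Longrightarrow> A = Tb #>\<^bsub>Gb\<^esub> a"
proof -
  assume A: "A \<in> carrier Q" and a: "a \<in> A"
  then obtain c where c: "c \<in> carrier Gb" "A = Tb #>\<^bsub>Gb\<^esub> c" by (auto simp: carrier_Q RCOSETS_def)
  show ?thesis using GB.repr_independence[of a Tb c] a c Tb_sub by simp
qed

lemma Q_elem_sub: "A \<in> carrier Q \<Longrightarrow> A \<subseteq> carrier Gb"
proof -
  assume "A \<in> carrier Q"
  then obtain c where c: "c \<in> carrier Gb" "A = Tb #>\<^bsub>Gb\<^esub> c" by (auto simp: carrier_Q RCOSETS_def)
  have "Tb \<subseteq> carrier Gb" using Tb_sub subgroup.subset by blast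
  then show ?thesis using GB.r_coset_subset_G[OF _ c(1)] c(2) by simp
qed

lemma Q_mem: "A \<in> carrier Q \<Longrightarrow> a \<in> A \<Longrightarrow> t \<in> Tb \<Longrightarrow> a \<otimes>\<^bsub>Gb\<^esub> t \<in> A"
proof -
  assume A: "A \<in> carrier Q" and a: "a \<in> A" and t: "t \<in> Tb"
  have ac: "a \<in> carrier Gb" using Q_elem_sub A a by blast
  have tc: "t \<in> carrier Gb" using t Tb_sub subgroup.subset by blast
  have "t \<otimes>\<^bsub>Gb\<^esub> a \<in> Tb #>\<^bsub>Gb\<^esub> a" using GB.rcosI[OF t _ ac] Tb_sub subgroup.subset by blast
  then show ?thesis using Q_elem[OF A a] GB.m_comm[OF tc ac] by simp
qed

lemma Q_same: "A \<in> carrier Q \<Longrightarrow> a \<in> A \<Longrightarrow> a' \<in> A \<Longrightarrow> \<exists>t\<in>Tb. a' = a \<otimes>\<^bsub>Gb\<^esub> t"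
proof -
  assume A: "A \<in> carrier Q" and a: "a \<in> A" and a': "a' \<in> A"
  have "a' \<in> Tb #>\<^bsub>Gb\<^esub> a" using Q_elem[OF A a] a' by simp
  then obtain t where t: "t \<in> Tb" "a' = t \<otimes>\<^bsub>Gb\<^esub> a" by (auto simp: r_coset_def)
  have ac: "a \<in> carrier Gb" using Q_elem_sub A a by blast
  have tc: "t \<in> carrier Gb" using t Tb_sub subgroup.subset by blast
  show ?thesis using t GB.m_comm[OF tc ac] by auto
qed

lemma Q_eq: "A \<in> carrier Q \<Longrightarrow> B \<in> carrier Q \<Longrightarrow> a \<in> A \<Longrightarrow> a \<in> B \<Longrightarrow> A = B"
  using Q_elem by metis

lemma Q_prod3: assumes "x \<in> carrier Gb" "y \<in> carrier Gb" "z \<in> carrier Gb"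
  shows "(Tb #>\<^bsub>Gb\<^esub> x) \<otimes>\<^bsub>Q\<^esub> (Tb #>\<^bsub>Gb\<^esub> y) \<otimes>\<^bsub>Q\<^esub> (Tb #>\<^bsub>Gb\<^esub> z) = Tb #>\<^bsub>Gb\<^esub> (x \<otimes>\<^bsub>Gb\<^esub> y \<otimes>\<^bsub>Gb\<^esub> z)"
  using assms normal.rcos_sum[OF Tb_normal] by (simp add: mult_Q)

lemma Q_one_mem: assumes "x \<in> carrier Gb" "Tb #>\<^bsub>Gb\<^esub> x = \<one>\<^bsub>Q\<^esub>" shows "x \<in> Tb"
  using GB.rcos_self[OF assms(1) Tb_sub] assms(2) by (simp add: one_Q)

lemma g0c_in: "g0c \<in> carrier Q"
  using g0_in Tb_sub by (auto simp: g0c_def carrier_Q intro!: GB.rcosetsI subgroup.subset)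

lemma g0c_elem: "g0c = Tb #>\<^bsub>Gb\<^esub> g0" by (rule g0c_def)

lemma gam_carr: "A \<in> carrier Q \<Longrightarrow> gam A \<in> carrier Gb"
  using gam_in Q_elem_sub by blast

lemma prod_in_Tb:
  assumes A: "A \<in> carrier Q" and B: "B \<in> carrier Q" and eq: "g0c \<otimes>\<^bsub>Q\<^esub> A \<otimes>\<^bsub>Q\<^esub> B = \<one>\<^bsub>Q\<^esub>"
    and a: "a \<in> A" and bb: "bb \<in> B"
  shows "g0 \<otimes>\<^bsub>Gb\<^esub> a \<otimes>\<^bsub>Gb\<^esub> bb \<in> Tb"
proof -
  have ac: "a \<in> carrier Gb" "bb \<in> carrier Gb" using A B a bb Q_elem_sub by auto
  have "Tb #>\<^bsub>Gb\<^esub> (g0 \<otimes>\<^bsub>Gb\<^esub> a \<otimes>\<^bsub>Gb\<^esub> bb) = g0c \<otimes>\<^bsub>Q\<^esub> A \<otimes>\<^bsub>Q\<^esub> B"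
    using Q_prod3[OF g0_in ac] Q_elem[OF A a] Q_elem[OF B bb] g0c_def by simp
  also have "\<dots> = \<one>\<^bsub>Q\<^esub>" by (rule eq)
  finally have e: "Tb #>\<^bsub>Gb\<^esub> (g0 \<otimes>\<^bsub>Gb\<^esub> a \<otimes>\<^bsub>Gb\<^esub> bb) = \<one>\<^bsub>Q\<^esub>" .
  have c: "g0 \<otimes>\<^bsub>Gb\<^esub> a \<otimes>\<^bsub>Gb\<^esub> bb \<in> carrier Gb" using ac g0_in by simp
  show ?thesis by (rule Q_one_mem[OF c e])
qed

lemma dual_inv: assumes A: "A \<in> carrier Q" and B: "B \<in> carrier Q"
  and eq: "g0c \<otimes>\<^bsub>Q\<^esub> A \<otimes>\<^bsub>Q\<^esub> B = \<one>\<^bsub>Q\<^esub>"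
  shows "B = inv\<^bsub>Q\<^esub> (g0c \<otimes>\<^bsub>Q\<^esub> A)" and "A = inv\<^bsub>Q\<^esub> (g0c \<otimes>\<^bsub>Q\<^esub> B)"
    and "g0c \<otimes>\<^bsub>Q\<^esub> B \<otimes>\<^bsub>Q\<^esub> A = \<one>\<^bsub>Q\<^esub>"
proof -
  have g: "g0c \<in> carrier Q" by (rule g0c_in)
  have gA: "g0c \<otimes>\<^bsub>Q\<^esub> A \<in> carrier Q" using g A by simp
  have gB: "g0c \<otimes>\<^bsub>Q\<^esub> B \<in> carrier Q" using g B by simp
  show "B = inv\<^bsub>Q\<^esub> (g0c \<otimes>\<^bsub>Q\<^esub> A)"
    using QQ.inv_equality[OF _ gA B] eq QQ.m_comm[OF gA B] by simp
  have "g0c \<otimes>\<^bsub>Q\<^esub> B \<otimes>\<^bsub>Q\<^esub> A = g0c \<otimes>\<^bsub>Q\<^esub> (B \<otimes>\<^bsub>Q\<^esub> A)"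
    using g A B by (simp add: QQ.m_assoc)
  also have "\<dots> = g0c \<otimes>\<^bsub>Q\<^esub> (A \<otimes>\<^bsub>Q\<^esub> B)" using QQ.m_comm[OF A B] by simp
  also have "\<dots> = \<one>\<^bsub>Q\<^esub>" using eq g A B by (simp add: QQ.m_assoc)
  finally show e2: "g0c \<otimes>\<^bsub>Q\<^esub> B \<otimes>\<^bsub>Q\<^esub> A = \<one>\<^bsub>Q\<^esub>" .
  show "A = inv\<^bsub>Q\<^esub> (g0c \<otimes>\<^bsub>Q\<^esub> B)"
    using QQ.inv_equality[OF _ gB A] e2 QQ.m_comm[OF gB A] by simp
qed

lemma dual_same: assumes A: "A \<in> carrier Q" and B: "B \<in> carrier Q"
  and eq: "g0c \<otimes>\<^bsub>Q\<^esub> A \<otimes>\<^bsub>Q\<^esub> B = \<one>\<^bsub>Q\<^esub>" and eq2: "g0c \<otimes>\<^bsub>Q\<^esub> A \<otimes>\<^bsub>Q\<^esub> A = \<one>\<^bsub>Q\<^esub>"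
  shows "B = A"
  using dual_inv(1)[OF A B eq] dual_inv(1)[OF A A eq2] by simp


lemma chi_one: "chi \<one>\<^bsub>G\<^esub> = 1"
proof -
  have "chi \<one>\<^bsub>G\<^esub> = chi \<one>\<^bsub>G\<^esub> * chi \<one>\<^bsub>G\<^esub>" using chi_mult by (metis GG.l_one GG.one_closed)
  then show ?thesis using chi_nz by (metis GG.one_closed mult_cancel_left1)
qed

lemma chi_multG: "a \<in> carrier G \<Longrightarrow> c \<in> carrier G \<Longrightarrow> chi (a \<otimes>\<^bsub>G\<^esub> c) = chi a * chi c"
  using chi_mult by blast

lemma chi2_H: "x \<in> H \<Longrightarrow> (chi x)^2 = 1"
  using chi_one chi_h by (auto simp: H_def power2_eq_square)

lemma E1: assumes x: "x \<in> carrier Gb" and g: "g \<in> x" and g': "g' \<in> x"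
  shows "(chi g)^2 = (chi g')^2"
proof -
  obtain c where c: "c \<in> carrier G" "x = H #>\<^bsub>G\<^esub> c" using Gb_elem[OF x] by blast
  obtain k where k: "k \<in> H" "g = k \<otimes>\<^bsub>G\<^esub> c" using g c by (auto simp: r_coset_def)
  obtain k' where k': "k' \<in> H" "g' = k' \<otimes>\<^bsub>G\<^esub> c" using g' c by (auto simp: r_coset_def)
  have kc: "k \<in> carrier G" "k' \<in> carrier G" using k k' H_sub subgroup.subset by blast+
  have "(chi g)^2 = (chi k)^2 * (chi c)^2" using k kc c chi_multG by (simp add: power_mult_distrib)
  also have "\<dots> = (chi c)^2" using chi2_H k by simp
  also have "\<dots> = (chi k')^2 * (chi c)^2" using chi2_H k' by simp
  also have "\<dots> = (chi g')^2" using k' kc c chi_multG by (simp add: power_mult_distrib)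
  finally show ?thesis .
qed

lemma Gb_elem_carr: "x \<in> carrier Gb \<Longrightarrow> g \<in> x \<Longrightarrow> g \<in> carrier G"
  using Gb_elem_sub by blast

lemma E2: assumes triv: "\<forall>y\<in>\<Union>Tb. (chi y)^2 = 1"
  and A: "A \<in> carrier Q" and a: "a \<in> A" and a': "a' \<in> A" and g: "g \<in> a" and g': "g' \<in> a'"
  shows "(chi g)^2 = (chi g')^2"
proof -
  obtain t where t: "t \<in> Tb" "a' = a \<otimes>\<^bsub>Gb\<^esub> t" using Q_same[OF A a a'] by blast
  obtain y z where yz: "y \<in> a" "z \<in> t" "g' = y \<otimes>\<^bsub>G\<^esub> z" using Gb_mult_mem g' t by blast
  have ac: "a \<in> carrier Gb" using A a Q_elem_sub by blast
  have tc: "t \<in> carrier Gb" using t Tb_sub subgroup.subset by blast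
  have yc: "y \<in> carrier G" using Gb_elem_carr[OF ac yz(1)] .
  have zc: "z \<in> carrier G" using Gb_elem_carr[OF tc yz(2)] .
  have "(chi g')^2 = (chi y)^2 * (chi z)^2" using yz yc zc chi_multG by (simp add: power_mult_distrib)
  also have "(chi z)^2 = 1" using triv yz(2) t(1) by blast
  finally show ?thesis using E1[OF ac g yz(1)] by simp
qed

lemma one_in_UTb: "\<one>\<^bsub>G\<^esub> \<in> \<Union>Tb"
proof -
  have "H \<in> Tb" using subgroup.one_closed[OF Tb_sub] one_Gb by simp
  moreover have "\<one>\<^bsub>G\<^esub> \<in> H" by (simp add: H_def)
  ultimately show ?thesis by blast
qed

lemma UTb_carr: "x \<in> \<Union>Tb \<Longrightarrow> x \<in> carrier G"
  using Tb_sub subgroup.subset Gb_elem_carr by blast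

lemma UTb_elem: "t \<in> Tb \<Longrightarrow> x \<in> t \<Longrightarrow> t = H #>\<^bsub>G\<^esub> x"
proof -
  assume t: "t \<in> Tb" and x: "x \<in> t"
  have tc: "t \<in> carrier Gb" using t Tb_sub subgroup.subset by blast
  obtain c where c: "c \<in> carrier G" "t = H #>\<^bsub>G\<^esub> c" using Gb_elem[OF tc] by blast
  show ?thesis using GG.repr_independence[of x H c] x c H_sub by simp
qed

lemma iso_triv: assumes "(G\<lparr>carrier := \<Union>Tb\<rparr>) \<cong> ((Gb\<lparr>carrier := Tb\<rparr>) \<times>\<times> (G\<lparr>carrier := H\<rparr>))"
  shows "\<forall>y\<in>\<Union>Tb. (chi y)^2 = 1"
proof
  fix x assume x: "x \<in> \<Union>Tb"
  obtain f where f: "f \<in> iso (G\<lparr>carrier := \<Union>Tb\<rparr>) ((Gb\<lparr>carrier := Tb\<rparr>) \<times>\<times> (G\<lparr>carrier := H\<rparr>))"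
    using assms by (auto simp: is_iso_def)
  have fh: "f \<in> hom (G\<lparr>carrier := \<Union>Tb\<rparr>) ((Gb\<lparr>carrier := Tb\<rparr>) \<times>\<times> (G\<lparr>carrier := H\<rparr>))"
    using f by (simp add: iso_def)
  have fhom: "\<And>x y. x \<in> \<Union>Tb \<Longrightarrow> y \<in> \<Union>Tb \<Longrightarrow> f (x \<otimes>\<^bsub>G\<^esub> y) = (fst (f x) \<otimes>\<^bsub>Gb\<^esub> fst (f y), snd (f x) \<otimes>\<^bsub>G\<^esub> snd (f y))"
  proof -
    fix x y assume "x \<in> \<Union>Tb" "y \<in> \<Union>Tb"
    then have "f (x \<otimes>\<^bsub>G\<lparr>carrier := \<Union>Tb\<rparr>\<^esub> y) = f x \<otimes>\<^bsub>(Gb\<lparr>carrier := Tb\<rparr>) \<times>\<times> (G\<lparr>carrier := H\<rparr>)\<^esub> f y"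
      using hom_mult[OF fh] by simp
    then show "f (x \<otimes>\<^bsub>G\<^esub> y) = (fst (f x) \<otimes>\<^bsub>Gb\<^esub> fst (f y), snd (f x) \<otimes>\<^bsub>G\<^esub> snd (f y))"
      by (simp add: DirProd_def case_prod_beta)
  qed
  have fin: "\<And>x. x \<in> \<Union>Tb \<Longrightarrow> f x \<in> Tb \<times> H"
    using hom_in_carrier[OF fh] by simp
  have finj: "inj_on f (\<Union>Tb)" using f by (auto simp: iso_def bij_betw_def)
  have sq: "\<And>x. x \<in> \<Union>Tb \<Longrightarrow> f (x \<otimes>\<^bsub>G\<^esub> x) = (H, \<one>\<^bsub>G\<^esub>)"
  proof -
    fix x assume x: "x \<in> \<Union>Tb"
    have "fst (f x) \<in> Tb" "snd (f x) \<in> H" using fin[OF x] by auto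
    moreover have "\<And>k. k \<in> H \<Longrightarrow> k \<otimes>\<^bsub>G\<^esub> k = \<one>\<^bsub>G\<^esub>" using h_sq by (auto simp: H_def)
    ultimately show "f (x \<otimes>\<^bsub>G\<^esub> x) = (H, \<one>\<^bsub>G\<^esub>)" using fhom[OF x x] Tb_el2 one_Gb by simp
  qed
  have xx: "x \<otimes>\<^bsub>G\<^esub> x \<in> \<Union>Tb"
  proof -
    obtain t where t: "t \<in> Tb" "x \<in> t" using x by blast
    have "x \<otimes>\<^bsub>G\<^esub> x \<in> t \<otimes>\<^bsub>Gb\<^esub> t" by (rule Gb_mem_mult[OF t(2) t(2)])
    moreover have "t \<otimes>\<^bsub>Gb\<^esub> t \<in> Tb" using subgroup.m_closed[OF Tb_sub t(1) t(1)] .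
    ultimately show ?thesis by blast
  qed
  have "f (x \<otimes>\<^bsub>G\<^esub> x) = f (\<one>\<^bsub>G\<^esub> \<otimes>\<^bsub>G\<^esub> \<one>\<^bsub>G\<^esub>)" using sq[OF x] sq[OF one_in_UTb] by simp
  also have "\<one>\<^bsub>G\<^esub> \<otimes>\<^bsub>G\<^esub> \<one>\<^bsub>G\<^esub> = \<one>\<^bsub>G\<^esub>" by simp
  finally have "x \<otimes>\<^bsub>G\<^esub> x = \<one>\<^bsub>G\<^esub>" using inj_onD[OF finj _ xx one_in_UTb] by blast
  moreover have "chi (x \<otimes>\<^bsub>G\<^esub> x) = chi x * chi x" using chi_multG UTb_carr[OF x] by blast
  ultimately have "chi x * chi x = 1" using chi_one by simp
  then show "(chi x)^2 = 1" by (simp add: power2_eq_square)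
qed

lemma sq1_cases: "(c::'f)^2 = 1 \<Longrightarrow> c = 1 \<or> c = -1"
  by (metis power2_eq_1_iff)

lemma one_ne_m1: "(1::'f) \<noteq> -1"
  using F_char by (metis add_eq_0_iff equation_minus_iff one_add_one)

lemma triv_iso: assumes triv: "\<forall>y\<in>\<Union>Tb. (chi y)^2 = 1"
  shows "(G\<lparr>carrier := \<Union>Tb\<rparr>) \<cong> ((Gb\<lparr>carrier := Tb\<rparr>) \<times>\<times> (G\<lparr>carrier := H\<rparr>))"
proof -
  define eps where "eps x = (if chi x = 1 then \<one>\<^bsub>G\<^esub> else h)" for x
  define f where "f x = (H #>\<^bsub>G\<^esub> x, eps x)" for x
  have pm: "\<And>x. x \<in> \<Union>Tb \<Longrightarrow> chi x = 1 \<or> chi x = -1" using triv sq1_cases by blast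
  have hc: "h \<in> carrier G" by (rule h_in)
  have chi_hx: "\<And>x. x \<in> carrier G \<Longrightarrow> chi (h \<otimes>\<^bsub>G\<^esub> x) = - chi x" using chi_multG[OF hc] chi_h by simp
  have in1: "\<And>x. x \<in> \<Union>Tb \<Longrightarrow> H #>\<^bsub>G\<^esub> x \<in> Tb" using UTb_elem by blast
  have eps_in: "\<And>x. eps x \<in> H" by (simp add: eps_def H_def)
  have "f \<in> hom (G\<lparr>carrier := \<Union>Tb\<rparr>) ((Gb\<lparr>carrier := Tb\<rparr>) \<times>\<times> (G\<lparr>carrier := H\<rparr>))"
  proof (rule homI)
    fix x assume "x \<in> carrier (G\<lparr>carrier := \<Union>Tb\<rparr>)"
    then show "f x \<in> carrier ((Gb\<lparr>carrier := Tb\<rparr>) \<times>\<times> (G\<lparr>carrier := H\<rparr>))"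
      using in1 eps_in by (simp add: f_def)
  next
    fix x y assume "x \<in> carrier (G\<lparr>carrier := \<Union>Tb\<rparr>)" "y \<in> carrier (G\<lparr>carrier := \<Union>Tb\<rparr>)"
    then have x: "x \<in> \<Union>Tb" and y: "y \<in> \<Union>Tb" by auto
    have xc: "x \<in> carrier G" and yc: "y \<in> carrier G" using x y UTb_carr by auto
    have c1: "H #>\<^bsub>G\<^esub> (x \<otimes>\<^bsub>G\<^esub> y) = (H #>\<^bsub>G\<^esub> x) \<otimes>\<^bsub>Gb\<^esub> (H #>\<^bsub>G\<^esub> y)"
      using normal.rcos_sum[OF H_normal xc yc] by (simp add: mult_Gb)
    have c2: "eps (x \<otimes>\<^bsub>G\<^esub> y) = eps x \<otimes>\<^bsub>G\<^esub> eps y"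
      using pm[OF x] pm[OF y] chi_multG[OF xc yc] one_ne_m1 h_sq hc
      by (auto simp: eps_def)
    show "f (x \<otimes>\<^bsub>G\<lparr>carrier := \<Union>Tb\<rparr>\<^esub> y) = f x \<otimes>\<^bsub>(Gb\<lparr>carrier := Tb\<rparr>) \<times>\<times> (G\<lparr>carrier := H\<rparr>)\<^esub> f y"
      using c1 c2 by (simp add: f_def DirProd_def)
  qed
  moreover have "bij_betw f (\<Union>Tb) (Tb \<times> H)"
  proof (rule bij_betwI')
    fix x y assume x: "x \<in> \<Union>Tb" and y: "y \<in> \<Union>Tb"
    show "(f x = f y) = (x = y)"
    proof
      assume e: "f x = f y"
      have xc: "x \<in> carrier G" and yc: "y \<in> carrier G" using x y UTb_carr by auto
      have "y \<in> H #>\<^bsub>G\<^esub> x" using e GG.rcos_self[OF yc H_sub] by (simp add: f_def)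
      then obtain k where k: "k \<in> H" "y = k \<otimes>\<^bsub>G\<^esub> x" by (auto simp: r_coset_def)
      show "x = y"
      proof (cases "k = h")
        case True
        then have "chi y = - chi x" using chi_hx[OF xc] k by simp
        moreover have "eps x = eps y" using e by (simp add: f_def)
        ultimately show ?thesis using pm[OF x] pm[OF y] one_ne_m1 h_ne
          by (auto simp: eps_def split: if_splits)
      next
        case False
        then have "k = \<one>\<^bsub>G\<^esub>" using k by (simp add: H_def)
        then show ?thesis using k xc by simp
      qed
    qed simp
  next
    fix x assume "x \<in> \<Union>Tb" then show "f x \<in> Tb \<times> H" using in1 eps_in by (simp add: f_def)
  next
    fix p assume p: "p \<in> Tb \<times> H"
    then obtain t k where tk: "p = (t, k)" "t \<in> Tb" "k \<in> H" by auto
    have tc: "t \<in> carrier Gb" using tk Tb_sub subgroup.subset by blast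
    obtain c where c: "c \<in> t" using Gb_elem_ne[OF tc] by blast
    have cc: "c \<in> carrier G" using Gb_elem_carr[OF tc c] .
    have cU: "c \<in> \<Union>Tb" using c tk by blast
    have ht: "h \<otimes>\<^bsub>G\<^esub> c \<in> t"
    proof -
      have "h \<otimes>\<^bsub>G\<^esub> c \<in> H #>\<^bsub>G\<^esub> c" using GG.rcosI[of h H c] cc hc H_sub subgroup.subset
        by (auto simp: H_def)
      then show ?thesis using UTb_elem[OF tk(2) c] by simp
    qed
    have hU: "h \<otimes>\<^bsub>G\<^esub> c \<in> \<Union>Tb" using ht tk by blast
    show "\<exists>x\<in>\<Union>Tb. p = f x"
    proof (cases "eps c = k")
      case True
      then show ?thesis using cU tk UTb_elem[OF tk(2) c] by (auto simp: f_def)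
    next
      case False
      have "eps (h \<otimes>\<^bsub>G\<^esub> c) = k"
        using False tk(3) pm[OF cU] chi_hx[OF cc] one_ne_m1 by (auto simp: eps_def H_def)
      then show ?thesis using hU tk UTb_elem[OF tk(2) ht] by (auto simp: f_def)
    qed
  qed
  ultimately show ?thesis unfolding is_iso_def iso_def by auto
qed


definition tau where "tau A = g0 \<otimes>\<^bsub>Gb\<^esub> gam A \<otimes>\<^bsub>Gb\<^esub> gam A"
definition sd where "sd A = (g0c \<otimes>\<^bsub>Q\<^esub> A \<otimes>\<^bsub>Q\<^esub> A = \<one>\<^bsub>Q\<^esub>)"
definition delta where "delta A = (if sd A then 1 / (mu A * beta (tau A)) else 1 / mu A)"

lemma tau_Tb: "A \<in> carrier Q \<Longrightarrow> sd A \<Longrightarrow> tau A \<in> Tb"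
  unfolding tau_def sd_def using prod_in_Tb gam_in by blast

lemma beta_tau: "A \<in> carrier Q \<Longrightarrow> sd A \<Longrightarrow> beta (tau A) = 1 \<or> beta (tau A) = -1"
  using tau_Tb beta_pm by blast

lemma beta_tau_sq: "A \<in> carrier Q \<Longrightarrow> sd A \<Longrightarrow> beta (tau A) * beta (tau A) = 1"
  using beta_tau by fastforce

lemma delta_nz: "A \<in> carrier Q \<Longrightarrow> delta A \<noteq> 0"
proof -
  assume A: "A \<in> carrier Q"
  show ?thesis
  proof (cases "sd A")
    case True
    then have "beta (tau A) \<noteq> 0" using beta_tau[OF A True] by auto
    then show ?thesis using True mu_nz A by (simp add: delta_def)
  qed (use mu_nz A in \<open>simp add: delta_def\<close>)
qed

lemma dg_carr: "dg i \<in> carrier Q" using dg_in by blast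

lemma b_supp': "b i j \<noteq> 0 \<Longrightarrow> g0c \<otimes>\<^bsub>Q\<^esub> dg i \<otimes>\<^bsub>Q\<^esub> dg j = \<one>\<^bsub>Q\<^esub>"
  using b_supp by blast

lemma b_rel: "b i j = mu (dg j) * b j i"
proof (cases "b i j = 0 \<and> b j i = 0")
  case True then show ?thesis by simp
next
  case False
  then have eq: "g0c \<otimes>\<^bsub>Q\<^esub> dg j \<otimes>\<^bsub>Q\<^esub> dg i = \<one>\<^bsub>Q\<^esub>"
    using b_supp' dual_inv(3)[OF dg_carr dg_carr] by blast
  have "dg i = inv\<^bsub>Q\<^esub> (g0c \<otimes>\<^bsub>Q\<^esub> dg j)" by (rule dual_inv(1)[OF dg_carr dg_carr eq])
  then show ?thesis using b_mu by blast
qed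

lemma dd1: assumes bij: "b i j \<noteq> 0" shows "delta (dg i) * delta (dg j) = 1"
proof -
  have m: "mu (dg i) * mu (dg j) = 1"
  proof -
    have "b i j = mu (dg j) * (mu (dg i) * b i j)" using b_rel[of i j] b_rel[of j i] by simp
    then have "1 * b i j = (mu (dg i) * mu (dg j)) * b i j" by (simp add: ac_simps)
    then show ?thesis using bij by (metis mult_cancel_right)
  qed
  have eq: "g0c \<otimes>\<^bsub>Q\<^esub> dg i \<otimes>\<^bsub>Q\<^esub> dg j = \<one>\<^bsub>Q\<^esub>" using b_supp' bij .
  show ?thesis
  proof (cases "sd (dg i)")
    case True
    then have "dg j = dg i" using dual_same[OF dg_carr dg_carr eq] by (simp add: sd_def)
    then have "mu (dg i) * mu (dg i) = 1" using m by simp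
    moreover have "beta (tau (dg i)) * beta (tau (dg i)) = 1" using beta_tau_sq[OF dg_carr True] .
    ultimately have "(mu (dg i) * beta (tau (dg i))) * (mu (dg i) * beta (tau (dg i))) = 1"
      by (simp add: ac_simps)
    then show ?thesis using True \<open>dg j = dg i\<close>
      by (simp add: delta_def)
  next
    case False
    have "\<not> sd (dg j)"
    proof
      assume "sd (dg j)"
      then have "dg i = dg j" using dual_same[OF dg_carr dg_carr dual_inv(3)[OF dg_carr dg_carr eq]] by (simp add: sd_def)
      then show False using False \<open>sd (dg j)\<close> by simp
    qed
    then show ?thesis using False m by (simp add: delta_def)
  qed
qed

lemma ex_dual: "\<exists>j. b i j \<noteq> 0"
proof -
  define c where "c k = (if k = i then (1::'f) else 0)" for k
  have s: "{k. c k \<noteq> 0} = {i}" by (auto simp: c_def)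
  have "finite {k. c k \<noteq> 0} \<and> (\<exists>k. c k \<noteq> 0)" using s by auto
  then obtain j where "(\<Sum>k\<in>{k. c k \<noteq> 0}. c k * b k j) \<noteq> 0" using b_nondeg by blast
  then show ?thesis using s by (auto simp: c_def)
qed

definition Pc where "Pc \<longleftrightarrow> (\<forall>i j. \<forall>au\<in>dg i. \<forall>av\<in>dg j. \<forall>g\<in>g0 \<otimes>\<^bsub>Gb\<^esub> au \<otimes>\<^bsub>Gb\<^esub> av.
    delta (dg i) * delta (dg j) = (chi g)^2)"

lemma dgel_carr: "au \<in> dg i \<Longrightarrow> au \<in> carrier Gb"
  using Q_elem_sub dg_carr by blast

lemma chi3: "w \<in> carrier G \<Longrightarrow> p \<in> carrier G \<Longrightarrow> q \<in> carrier G \<Longrightarrow>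
   (chi (w \<otimes>\<^bsub>G\<^esub> p \<otimes>\<^bsub>G\<^esub> q))^2 = (chi w)^2 * (chi p)^2 * (chi q)^2"
  by (simp add: chi_multG power_mult_distrib)

lemma Pc_triv: assumes P: Pc shows "\<forall>y\<in>\<Union>Tb. (chi y)^2 = 1"
proof
  fix x assume x: "x \<in> \<Union>Tb"
  then obtain t where t: "t \<in> Tb" "x \<in> t" by blast
  obtain i0 :: 'i where True by simp
  obtain j0 where j0: "b i0 j0 \<noteq> 0" using ex_dual by blast
  define au where "au = gam (dg i0)"
  define av where "av = gam (dg j0)"
  have au: "au \<in> dg i0" "au \<in> carrier Gb" using gam_in dg_carr au_def gam_carr by auto
  have av: "av \<in> dg j0" "av \<in> carrier Gb" using gam_in dg_carr av_def gam_carr by auto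
  obtain w where w: "w \<in> g0" using Gb_elem_ne[OF g0_in] by blast
  obtain p where p: "p \<in> au" using Gb_elem_ne[OF au(2)] by blast
  obtain q where q: "q \<in> av" using Gb_elem_ne[OF av(2)] by blast
  have wc: "w \<in> carrier G" using Gb_elem_carr[OF g0_in w] .
  have pc: "p \<in> carrier G" using Gb_elem_carr[OF au(2) p] .
  have qc: "q \<in> carrier G" using Gb_elem_carr[OF av(2) q] .
  have xc: "x \<in> carrier G" using UTb_carr x by blast
  have au': "au \<otimes>\<^bsub>Gb\<^esub> t \<in> dg i0" using Q_mem[OF dg_carr au(1) t(1)] .
  have g1: "w \<otimes>\<^bsub>G\<^esub> p \<otimes>\<^bsub>G\<^esub> q \<in> g0 \<otimes>\<^bsub>Gb\<^esub> au \<otimes>\<^bsub>Gb\<^esub> av"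
    using Gb_mem_mult[OF Gb_mem_mult[OF w p] q] .
  have g2: "w \<otimes>\<^bsub>G\<^esub> (p \<otimes>\<^bsub>G\<^esub> x) \<otimes>\<^bsub>G\<^esub> q \<in> g0 \<otimes>\<^bsub>Gb\<^esub> (au \<otimes>\<^bsub>Gb\<^esub> t) \<otimes>\<^bsub>Gb\<^esub> av"
    using Gb_mem_mult[OF Gb_mem_mult[OF w Gb_mem_mult[OF p t(2)]] q] .
  have e1: "delta (dg i0) * delta (dg j0) = (chi (w \<otimes>\<^bsub>G\<^esub> p \<otimes>\<^bsub>G\<^esub> q))^2"
    using P au(1) av(1) g1 unfolding Pc_def by blast
  have e2: "delta (dg i0) * delta (dg j0) = (chi (w \<otimes>\<^bsub>G\<^esub> (p \<otimes>\<^bsub>G\<^esub> x) \<otimes>\<^bsub>G\<^esub> q))^2"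
    using P au' av(1) g2 unfolding Pc_def by blast
  have "(chi w)^2 * (chi p)^2 * (chi q)^2 = (chi w)^2 * ((chi p)^2 * (chi x)^2) * (chi q)^2"
    using e1 e2 chi3[OF wc pc qc] chi3[OF wc _ qc, of "p \<otimes>\<^bsub>G\<^esub> x"] pc xc
    by (simp add: chi_multG power_mult_distrib)
  moreover have "chi w \<noteq> 0" "chi p \<noteq> 0" "chi q \<noteq> 0" using chi_nz wc pc qc by auto
  ultimately show "(chi x)^2 = 1" by (simp add: field_simps)
qed

definition Mc where "Mc \<longleftrightarrow> (\<exists>mu0::'f. mu0 \<noteq> 0 \<and>
   (\<forall>A\<in>dg ` UNIV. \<forall>a\<in>A. \<forall>g\<in>a. delta A = (chi g)^2 / mu0))"

lemma Pc_Mc: assumes P: Pc shows Mc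
proof -
  obtain i0 :: 'i where True by simp
  obtain j0 where j0: "b i0 j0 \<noteq> 0" using ex_dual by blast
  define A0 where "A0 = dg i0"
  define B0 where "B0 = dg j0"
  have a0: "gam A0 \<in> A0" "gam A0 \<in> carrier Gb" using gam_in dg_carr A0_def gam_carr by auto
  have b0: "gam B0 \<in> B0" "gam B0 \<in> carrier Gb" using gam_in dg_carr B0_def gam_carr by auto
  obtain w where w: "w \<in> g0" using Gb_elem_ne[OF g0_in] by blast
  obtain p where p: "p \<in> gam A0" using Gb_elem_ne[OF a0(2)] by blast
  obtain q where q: "q \<in> gam B0" using Gb_elem_ne[OF b0(2)] by blast
  have wc: "w \<in> carrier G" using Gb_elem_carr[OF g0_in w] .
  have pc: "p \<in> carrier G" using Gb_elem_carr[OF a0(2) p] .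
  have qc: "q \<in> carrier G" using Gb_elem_carr[OF b0(2) q] .
  have nz: "chi w \<noteq> 0" "chi p \<noteq> 0" "chi q \<noteq> 0" using chi_nz wc pc qc by auto
  have dA0: "delta A0 \<noteq> 0" "delta B0 \<noteq> 0" using delta_nz dg_carr A0_def B0_def by auto
  have "delta A0 * delta B0 = (chi (w \<otimes>\<^bsub>G\<^esub> p \<otimes>\<^bsub>G\<^esub> q))^2"
    using P a0(1) b0(1) Gb_mem_mult[OF Gb_mem_mult[OF w p] q]
    unfolding Pc_def A0_def B0_def by blast
  then have e0: "delta A0 * delta B0 = (chi w)^2 * (chi p)^2 * (chi q)^2"
    using chi3[OF wc pc qc] by simp
  define mu0 where "mu0 = (chi p)^2 / delta A0"
  have "mu0 \<noteq> 0" using nz dA0 by (simp add: mu0_def)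
  moreover have "\<forall>A\<in>dg ` UNIV. \<forall>a\<in>A. \<forall>g\<in>a. delta A = (chi g)^2 / mu0"
  proof (intro ballI)
    fix A a g assume A: "A \<in> dg ` UNIV" and a: "a \<in> A" and g: "g \<in> a"
    obtain i where i: "A = dg i" using A by blast
    have ac: "a \<in> carrier Gb" using dgel_carr a i by blast
    have gc: "g \<in> carrier G" using Gb_elem_carr[OF ac g] .
    have "delta A * delta B0 = (chi (w \<otimes>\<^bsub>G\<^esub> g \<otimes>\<^bsub>G\<^esub> q))^2"
      using P a i b0(1) Gb_mem_mult[OF Gb_mem_mult[OF w g] q]
      unfolding Pc_def B0_def by blast
    then have e: "delta A * delta B0 = (chi w)^2 * (chi g)^2 * (chi q)^2"
      using chi3[OF wc gc qc] by simp
    have x1: "delta A = (chi w)^2 * (chi g)^2 * (chi q)^2 / delta B0" using e dA0 by (simp add: field_simps)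
    have x2: "delta A0 = (chi w)^2 * (chi p)^2 * (chi q)^2 / delta B0" using e0 dA0 by (simp add: field_simps)
    show "delta A = (chi g)^2 / mu0"
      unfolding mu0_def x1 x2 using nz dA0 by (simp add: field_simps)
  qed
  ultimately show ?thesis unfolding Mc_def by blast
qed

lemma Mc_Pc: assumes triv: "\<forall>y\<in>\<Union>Tb. (chi y)^2 = 1" and M: Mc shows Pc
proof -
  obtain mu0 where m0: "mu0 \<noteq> 0" and md: "\<forall>A\<in>dg ` UNIV. \<forall>a\<in>A. \<forall>g\<in>a. delta A = (chi g)^2 / mu0"
    using M unfolding Mc_def by blast
  obtain i0 :: 'i where True by simp
  obtain j0 where j0: "b i0 j0 \<noteq> 0" using ex_dual by blast
  define A0 where "A0 = dg i0"
  define B0 where "B0 = dg j0"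
  have a0: "gam A0 \<in> A0" "gam A0 \<in> carrier Gb" using gam_in dg_carr A0_def gam_carr by auto
  have b0: "gam B0 \<in> B0" "gam B0 \<in> carrier Gb" using gam_in dg_carr B0_def gam_carr by auto
  obtain w where w: "w \<in> g0" using Gb_elem_ne[OF g0_in] by blast
  obtain p where p: "p \<in> gam A0" using Gb_elem_ne[OF a0(2)] by blast
  obtain q where q: "q \<in> gam B0" using Gb_elem_ne[OF b0(2)] by blast
  have wc: "w \<in> carrier G" using Gb_elem_carr[OF g0_in w] .
  have pc: "p \<in> carrier G" using Gb_elem_carr[OF a0(2) p] .
  have qc: "q \<in> carrier G" using Gb_elem_carr[OF b0(2) q] .
  have "g0 \<otimes>\<^bsub>Gb\<^esub> gam A0 \<otimes>\<^bsub>Gb\<^esub> gam B0 \<in> Tb"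
    using prod_in_Tb[OF dg_carr dg_carr b_supp'[OF j0]] a0(1) b0(1) A0_def B0_def by blast
  moreover have "w \<otimes>\<^bsub>G\<^esub> p \<otimes>\<^bsub>G\<^esub> q \<in> g0 \<otimes>\<^bsub>Gb\<^esub> gam A0 \<otimes>\<^bsub>Gb\<^esub> gam B0"
    using Gb_mem_mult[OF Gb_mem_mult[OF w p] q] .
  ultimately have "(chi (w \<otimes>\<^bsub>G\<^esub> p \<otimes>\<^bsub>G\<^esub> q))^2 = 1" using triv by blast
  then have t1: "(chi w)^2 * (chi p)^2 * (chi q)^2 = 1" using chi3[OF wc pc qc] by simp
  have d1: "delta A0 = (chi p)^2 / mu0" using md a0(1) p A0_def by blast
  have d2: "delta B0 = (chi q)^2 / mu0" using md b0(1) q B0_def by blast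
  have d3: "delta A0 * delta B0 = 1" using dd1[OF j0] A0_def B0_def by simp
  have "(chi p)^2 = mu0 * delta A0" "(chi q)^2 = mu0 * delta B0" using d1 d2 m0 by auto
  then have "(chi p)^2 * (chi q)^2 = mu0 * mu0 * (delta A0 * delta B0)" by (simp add: ac_simps)
  then have t2: "(chi p)^2 * (chi q)^2 = mu0^2" using d3 by (simp add: power2_eq_square)
  have wmu: "(chi w)^2 * mu0^2 = 1" using t1 unfolding t2[symmetric] by (simp add: ac_simps)
  show Pc unfolding Pc_def
  proof (intro allI ballI)
    fix i j au av g assume au: "au \<in> dg i" and av: "av \<in> dg j" and g: "g \<in> g0 \<otimes>\<^bsub>Gb\<^esub> au \<otimes>\<^bsub>Gb\<^esub> av"
    obtain w'x y where wxy: "w'x \<in> g0 \<otimes>\<^bsub>Gb\<^esub> au" "y \<in> av" "g = w'x \<otimes>\<^bsub>G\<^esub> y" using Gb_mult_mem[OF g] by blast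
    obtain w' x where wx: "w' \<in> g0" "x \<in> au" "w'x = w' \<otimes>\<^bsub>G\<^esub> x" using Gb_mult_mem[OF wxy(1)] by blast
    have auc: "au \<in> carrier Gb" "av \<in> carrier Gb" using au av dgel_carr by auto
    have w'c: "w' \<in> carrier G" using Gb_elem_carr[OF g0_in wx(1)] .
    have xc: "x \<in> carrier G" using Gb_elem_carr[OF auc(1) wx(2)] .
    have yc: "y \<in> carrier G" using Gb_elem_carr[OF auc(2) wxy(2)] .
    have ww: "(chi w')^2 = (chi w)^2" using E1[OF g0_in wx(1) w] .
    have cw: "(chi w)^2 = 1 / mu0^2" using wmu m0 by (simp add: field_simps)
    have "delta (dg i) = (chi x)^2 / mu0" using md au wx(2) by blast
    moreover have "delta (dg j) = (chi y)^2 / mu0" using md av wxy(2) by blast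
    ultimately have l: "delta (dg i) * delta (dg j) = (chi x)^2 * (chi y)^2 / mu0^2"
      by (simp add: power2_eq_square)
    have "(chi g)^2 = (chi w)^2 * (chi x)^2 * (chi y)^2"
      using chi3[OF w'c xc yc] wx wxy ww by simp
    then have "(chi g)^2 = (chi x)^2 * (chi y)^2 / mu0^2" using cw by simp
    then show "delta (dg i) * delta (dg j) = (chi g)^2" using l by simp
  qed
qed


definition bh where "bh = bhat Gb Tb X gam dg g0 b"
definition Nm where "Nm i = (if sd (dg i) then X (tau (dg i)) else mat 1)"
definition Dl :: "('i \<Rightarrow> 'f^'n^'n) \<Rightarrow> ('i \<Rightarrow> 'f^'n^'n)" where "Dl x = (\<lambda>i. smat (delta (dg i)) (x i))"
definition Rop where "Rop n c v u = (\<lambda>x p. \<Sum>k<(n::nat). smat (c k) (rop bh (v k) (u k) x p))"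

lemma bh_unf: "bh i j = (if sd (dg i) then (if dg j = dg i then smat (b i j) (X (tau (dg i))) else 0)
   else (if dg j = inv\<^bsub>Q\<^esub> (g0c \<otimes>\<^bsub>Q\<^esub> dg i) then smat (b i j) (mat 1) else 0))"
  unfolding bh_def bhat_def Let_def Q_def[symmetric] g0c_def[symmetric] sd_def tau_def by simp

lemma bh_eq: "bh i j = smat (b i j) (Nm i)"
proof (cases "b i j = 0")
  case True then show ?thesis by (simp add: bh_unf)
next
  case False
  have eq: "g0c \<otimes>\<^bsub>Q\<^esub> dg i \<otimes>\<^bsub>Q\<^esub> dg j = \<one>\<^bsub>Q\<^esub>" using b_supp' False .
  show ?thesis
  proof (cases "sd (dg i)")
    case True
    then have "dg j = dg i" using dual_same[OF dg_carr dg_carr eq] by (simp add: sd_def)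
    then show ?thesis using True by (simp add: bh_unf Nm_def)
  next
    case False
    have "dg j = inv\<^bsub>Q\<^esub> (g0c \<otimes>\<^bsub>Q\<^esub> dg i)" by (rule dual_inv(1)[OF dg_carr dg_carr eq])
    then show ?thesis using False by (simp add: bh_unf Nm_def)
  qed
qed

lemma Nm_inv: "invertible (Nm i)"
  using X_inv tau_Tb[OF dg_carr] invertible_mat1 by (auto simp: Nm_def)

lemma Nm_transp: "sd (dg i) \<Longrightarrow> transpose (Nm i) = smat (beta (tau (dg i))) (Nm i)"
  using X_transp tau_Tb[OF dg_carr] by (simp add: Nm_def)

lemma not_sd_dual: assumes eq: "g0c \<otimes>\<^bsub>Q\<^esub> dg i \<otimes>\<^bsub>Q\<^esub> dg j = \<one>\<^bsub>Q\<^esub>" and ns: "\<not> sd (dg i)"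
  shows "\<not> sd (dg j)"
proof
  assume "sd (dg j)"
  then have "dg i = dg j" using dual_same[OF dg_carr dg_carr dual_inv(3)[OF dg_carr dg_carr eq]] by (simp add: sd_def)
  then show False using ns \<open>sd (dg j)\<close> by simp
qed

lemma herm_bh: "smat (delta (dg i)) (transpose (bh j i)) = bh i j"
proof (cases "b i j = 0 \<and> b j i = 0")
  case True then show ?thesis by (simp add: bh_eq transpose_smat)
next
  case False
  have eq: "g0c \<otimes>\<^bsub>Q\<^esub> dg i \<otimes>\<^bsub>Q\<^esub> dg j = \<one>\<^bsub>Q\<^esub>"
    using b_supp' dual_inv(3)[OF dg_carr dg_carr] False by blast
  have bj: "b j i = mu (dg i) * b i j" by (rule b_rel)
  have mu: "mu (dg i) \<noteq> 0" using mu_nz dg_carr by blast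
  show ?thesis
  proof (cases "sd (dg i)")
    case True
    have dj: "dg j = dg i" using dual_same[OF dg_carr dg_carr eq] True by (simp add: sd_def)
    then have nj: "Nm j = Nm i" by (simp add: Nm_def)
    have bt: "beta (tau (dg i)) \<noteq> 0" using beta_tau[OF dg_carr True] by auto
    have co: "delta (dg i) * (b j i * beta (tau (dg i))) = b i j"
      using True bj mu bt by (simp add: delta_def field_simps)
    show ?thesis
      by (simp add: bh_eq nj transpose_smat Nm_transp[OF True] smat_smat co)
  next
    case False
    have "\<not> sd (dg j)" by (rule not_sd_dual[OF eq False])
    then have nj: "Nm j = mat 1" "Nm i = mat 1" using False by (simp_all add: Nm_def)
    have co: "delta (dg i) * b j i = b i j" using False bj mu by (simp add: delta_def)
    show ?thesis by (simp add: bh_eq nj transpose_smat smat_smat co)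
  qed
qed

lemma Vsp_fin: "x \<in> Vsp \<longleftrightarrow> finite {i. x i \<noteq> 0}" by (simp add: Vsp_def)

lemma Dl_supp: "{i. Dl u i \<noteq> 0} \<subseteq> {i. u i \<noteq> 0}" by (auto simp: Dl_def)

lemma Dl_Vsp: "u \<in> Vsp \<Longrightarrow> Dl u \<in> Vsp"
  unfolding Vsp_fin by (rule finite_subset[OF Dl_supp])

lemma herm: assumes u: "u \<in> Vsp" and x: "x \<in> Vsp"
  shows "transpose (formB bh u x) = formB bh x (Dl u)"
proof -
  define S where "S = {i. u i \<noteq> 0} \<union> {i. x i \<noteq> 0}"
  have fS: "finite S" using u x by (simp add: S_def Vsp_fin)
  have su: "{i. u i \<noteq> 0} \<subseteq> S" and sx: "{i. x i \<noteq> 0} \<subseteq> S" by (auto simp: S_def)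
  have sd': "{i. Dl u i \<noteq> 0} \<subseteq> S" using Dl_supp su by blast
  have tb: "transpose (bh i j) = smat (delta (dg i)) (bh j i)" for i j
    using arg_cong[OF herm_bh[of i j], of transpose] by (simp add: transpose_smat)
  have trm: "transpose (transpose (u i) ** bh i j ** x j) = transpose (x j) ** bh j i ** Dl u i" for i j
    by (simp add: matrix_transpose_mul matrix_mul_assoc tb Dl_def smat_mult_l smat_mult_r)
  have "transpose (formB bh u x) = transpose (\<Sum>i\<in>S. \<Sum>j\<in>S. transpose (u i) ** bh i j ** x j)"
    by (simp add: formB_S[OF fS su sx])
  also have "\<dots> = (\<Sum>i\<in>S. \<Sum>j\<in>S. transpose (x j) ** bh j i ** Dl u i)"
    by (simp add: transpose_sum trm)
  also have "\<dots> = (\<Sum>j\<in>S. \<Sum>i\<in>S. transpose (x j) ** bh j i ** Dl u i)" by (rule sum.swap)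
  also have "\<dots> = formB bh x (Dl u)" by (simp add: formB_S[OF fS sx sd'])
  finally show ?thesis .
qed

lemma Rop_apply: "Rop n c v u x = (\<lambda>p. \<Sum>k<n. smat (c k) (v k p ** formB bh (u k) x))"
  by (simp add: Rop_def rop_def)

lemma adj: assumes uv: "\<forall>k<n. u k \<in> Vsp \<and> v k \<in> Vsp" and x: "x \<in> Vsp" and y: "y \<in> Vsp"
  shows "formB bh (Rop n c v u x) y = formB bh x (Rop n c (\<lambda>k. Dl (u k)) v y)"
proof -
  have fv: "\<forall>k<n. finite {p. v k p \<noteq> 0}" using uv by (simp add: Vsp_fin)
  have fdu: "\<forall>k<n. finite {p. Dl (u k) p \<noteq> 0}" using uv Dl_Vsp by (simp add: Vsp_fin)
  have fy: "finite {j. y j \<noteq> 0}" using y by (simp add: Vsp_fin)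
  have fx: "finite {j. x j \<noteq> 0}" using x by (simp add: Vsp_fin)
  have "formB bh (Rop n c v u x) y = (\<Sum>k<n. smat (c k) (transpose (formB bh (u k) x) ** formB bh (v k) y))"
    unfolding Rop_apply by (rule formB_L1[OF fv fy])
  also have "\<dots> = (\<Sum>k<n. smat (c k) (formB bh x (Dl (u k)) ** formB bh (v k) y))"
    by (rule sum.cong[OF refl]) (simp add: herm uv x)
  also have "\<dots> = formB bh x (Rop n c (\<lambda>k. Dl (u k)) v y)"
    unfolding Rop_apply by (rule formB_L2[OF fdu fx, symmetric])
  finally show ?thesis .
qed


lemma formB_e: assumes w: "w \<in> Vsp"
  shows "formB bh (\<lambda>k. if k = i then mat 1 else 0) w = (\<Sum>j\<in>insert i {j. w j \<noteq> 0}. bh i j ** w j)"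
proof -
  define T where "T = insert i {j. w j \<noteq> 0}"
  have fT: "finite T" using w by (simp add: T_def Vsp_fin)
  have s1: "{k. (if k = i then mat 1 else 0 :: 'f^'n^'n) \<noteq> 0} \<subseteq> T" by (auto simp: T_def)
  have s2: "{j. w j \<noteq> 0} \<subseteq> T" by (auto simp: T_def)
  have "formB bh (\<lambda>k. if k = i then mat 1 else 0) w
     = (\<Sum>k\<in>T. \<Sum>j\<in>T. transpose (if k = i then mat 1 else 0) ** bh k j ** w j)"
    by (rule formB_S[OF fT s1 s2])
  also have "\<dots> = (\<Sum>k\<in>T. if k = i then (\<Sum>j\<in>T. bh k j ** w j) else 0)"
    by (rule sum.cong[OF refl]) simp
  also have "\<dots> = (\<Sum>j\<in>T. bh i j ** w j)" using fT by (simp add: T_def)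
  finally show ?thesis by (simp add: T_def)
qed

lemma e_Vsp: "(\<lambda>k. if k = i then mat 1 else 0 :: 'f^'n^'n) \<in> Vsp"
proof -
  have "{k. (if k = i then mat 1 else 0 :: 'f^'n^'n) \<noteq> 0} \<subseteq> {i}" by auto
  then show ?thesis unfolding Vsp_fin using finite_subset by blast
qed

lemma Nm_cancel: "Nm i ** A = Nm i ** B \<Longrightarrow> A = B"
proof -
  assume e: "Nm i ** A = Nm i ** B"
  obtain C where C: "C ** Nm i = mat 1" using Nm_inv unfolding invertible_def by blast
  have "C ** (Nm i ** A) = C ** (Nm i ** B)" using e by simp
  then show ?thesis by (simp add: matrix_mul_assoc C)
qed

lemma nondeg: assumes w: "w \<in> Vsp" and w': "w' \<in> Vsp"
  and eq: "\<forall>x\<in>Vsp. formB bh x w = formB bh x w'"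
  shows "w = w'"
proof -
  define S where "S = {j. w j \<noteq> 0} \<union> {j. w' j \<noteq> 0}"
  have fS: "finite S" using w w' by (simp add: S_def Vsp_fin)
  define D where "D j = w j - w' j" for j
  have row: "(\<Sum>j\<in>S. smat (b i j) (D j)) = 0" for i
  proof -
    have sum_eq: "(\<Sum>j\<in>insert i {j. z j \<noteq> 0}. bh i j ** z j) = Nm i ** (\<Sum>j\<in>S. smat (b i j) (z j))"
      if z: "{j. z j \<noteq> 0} \<subseteq> S" for z :: "'i \<Rightarrow> 'f^'n^'n"
    proof -
      have zz: "\<And>j. j \<notin> S \<Longrightarrow> z j = 0" using z by blast
      have "(\<Sum>j\<in>insert i {j. z j \<noteq> 0}. bh i j ** z j) = (\<Sum>j\<in>insert i S. bh i j ** z j)"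
        by (rule sum.mono_neutral_left) (use fS z zz in auto)
      also have "\<dots> = (\<Sum>j\<in>S. bh i j ** z j)"
        by (rule sum.mono_neutral_right) (use fS z zz in auto)
      also have "\<dots> = Nm i ** (\<Sum>j\<in>S. smat (b i j) (z j))"
        by (simp add: bh_eq sum_mmult_r smat_mult_l smat_mult_r)
      finally show ?thesis .
    qed
    have ee: "formB bh (\<lambda>k. if k = i then mat 1 else 0) w = formB bh (\<lambda>k. if k = i then mat 1 else 0) w'"
      by (rule eq[rule_format, OF e_Vsp])
    have sw: "{j. w j \<noteq> 0} \<subseteq> S" and sw': "{j. w' j \<noteq> 0} \<subseteq> S" by (auto simp: S_def)
    have "Nm i ** (\<Sum>j\<in>S. smat (b i j) (w j)) = formB bh (\<lambda>k. if k = i then mat 1 else 0) w"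
      unfolding formB_e[OF w] sum_eq[OF sw] ..
    also have "\<dots> = Nm i ** (\<Sum>j\<in>S. smat (b i j) (w' j))"
      unfolding ee formB_e[OF w'] sum_eq[OF sw'] ..
    finally have "(\<Sum>j\<in>S. smat (b i j) (w j)) = (\<Sum>j\<in>S. smat (b i j) (w' j))" by (rule Nm_cancel)
    then show ?thesis by (simp add: D_def smat_diff sum_subtractf)
  qed
  have ent: "D j $ p $ q = 0" if j: "j \<in> S" for j p q
  proof (rule ccontr)
    assume nz: "D j $ p $ q \<noteq> 0"
    define c where "c k = (if k \<in> S then mu (dg k) * D k $ p $ q else 0)" for k
    have sc: "{k. c k \<noteq> 0} \<subseteq> S" by (auto simp: c_def split: if_splits)
    have "c j \<noteq> 0" using nz j mu_nz dg_carr by (simp add: c_def)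
    moreover have "finite {k. c k \<noteq> 0}" using finite_subset[OF sc fS] .
    ultimately obtain i where i: "(\<Sum>k\<in>{k. c k \<noteq> 0}. c k * b k i) \<noteq> 0" using b_nondeg by blast
    have "(\<Sum>k\<in>{k. c k \<noteq> 0}. c k * b k i) = (\<Sum>k\<in>S. c k * b k i)"
      by (rule sum.mono_neutral_left[OF fS sc]) auto
    also have "\<dots> = (\<Sum>k\<in>S. b i k * D k $ p $ q)"
      by (rule sum.cong[OF refl]) (simp add: c_def b_rel[of i])
    also have "\<dots> = (\<Sum>k\<in>S. smat (b i k) (D k)) $ p $ q" by simp
    also have "\<dots> = 0" using row by simp
    finally show False using i by simp
  qed
  show ?thesis
  proof (rule ext)
    fix j show "w j = w' j"
    proof (cases "j \<in> S")
      case True then show ?thesis using ent[OF True] by (simp add: D_def vec_eq_iff)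
    next
      case False then show ?thesis by (simp add: S_def)
    qed
  qed
qed

lemma Rop_Vsp: assumes "\<forall>k<n. v k \<in> Vsp" shows "Rop n c v u x \<in> Vsp"
proof -
  have "{p. Rop n c v u x p \<noteq> 0} \<subseteq> (\<Union>k<n. {p. v k p \<noteq> 0})"
  proof
    fix p assume p: "p \<in> {p. Rop n c v u x p \<noteq> 0}"
    have "(\<forall>k<n. v k p = 0) \<Longrightarrow> Rop n c v u x p = 0" by (auto simp: Rop_apply intro!: sum.neutral)
    then show "p \<in> (\<Union>k<n. {p. v k p \<noteq> 0})" using p by blast
  qed
  moreover have "finite (\<Union>k<n. {p. v k p \<noteq> 0})" using assms by (simp add: Vsp_fin)
  ultimately show ?thesis unfolding Vsp_fin using finite_subset by blast
qed

lemma Rop_nonVsp: "x \<notin> Vsp \<Longrightarrow> Rop n c v u x = (\<lambda>p. 0)"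
  by (simp add: Rop_apply formB_inf Vsp_fin)

lemma Ralg_iff: "r \<in> Ralg Gb Tb X gam dg g0 b \<longleftrightarrow> (\<exists>n c u v au av.
     (\<forall>k<n. au k \<in> carrier Gb \<and> av k \<in> carrier Gb \<and>
            u k \<in> Vhom Gb Tb X gam dg (au k) \<and> v k \<in> Vhom Gb Tb X gam dg (av k)) \<and>
     r = Rop n c v u)"
  by (simp add: Ralg_def Rop_def bh_def)

lemma Rdeg_iff: "r \<in> Rdeg Gb Tb X gam dg g0 b a \<longleftrightarrow> (\<exists>n c u v au av.
     (\<forall>k<n. au k \<in> carrier Gb \<and> av k \<in> carrier Gb \<and>
            u k \<in> Vhom Gb Tb X gam dg (au k) \<and> v k \<in> Vhom Gb Tb X gam dg (av k) \<and>
            g0 \<otimes>\<^bsub>Gb\<^esub> au k \<otimes>\<^bsub>Gb\<^esub> av k = a) \<and>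
     r = Rop n c v u)"
  by (simp add: Rdeg_def Rop_def bh_def)

lemma Vhom_Vsp: "u \<in> Vhom Gb Tb X gam dg a \<Longrightarrow> u \<in> Vsp"
  by (simp add: Vhom_def)

lemma Dl_Vhom: assumes u: "u \<in> Vhom Gb Tb X gam dg a" shows "Dl u \<in> Vhom Gb Tb X gam dg a"
proof -
  have "Dl u \<in> Vsp" using Dl_Vsp Vhom_Vsp u by blast
  moreover have "Dl u i = 0 \<or> (\<exists>t\<in>Tb. \<exists>c. gam (dg i) \<otimes>\<^bsub>Gb\<^esub> t = a \<and> Dl u i = smat c (X t))" for i
  proof -
    have "u i = 0 \<or> (\<exists>t\<in>Tb. \<exists>c. gam (dg i) \<otimes>\<^bsub>Gb\<^esub> t = a \<and> u i = smat c (X t))"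
      using u by (simp add: Vhom_def)
    then show ?thesis
    proof
      assume "u i = 0" then show ?thesis by (simp add: Dl_def)
    next
      assume "\<exists>t\<in>Tb. \<exists>c. gam (dg i) \<otimes>\<^bsub>Gb\<^esub> t = a \<and> u i = smat c (X t)"
      then obtain t c where "t \<in> Tb" "gam (dg i) \<otimes>\<^bsub>Gb\<^esub> t = a" "u i = smat c (X t)" by blast
      then show ?thesis by (intro disjI2 bexI[of _ t] exI[of _ "delta (dg i) * c"]) (simp_all add: Dl_def smat_smat)
    qed
  qed
  ultimately show ?thesis by (simp add: Vhom_def)
qed

lemma phiR_Rop:
  assumes hom: "\<forall>k<n. au k \<in> carrier Gb \<and> av k \<in> carrier Gb \<and>
            u k \<in> Vhom Gb Tb X gam dg (au k) \<and> v k \<in> Vhom Gb Tb X gam dg (av k)"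
  shows "phiR Gb Tb X gam dg g0 b (Rop n c v u) = Rop n c (\<lambda>k. Dl (u k)) v"
proof -
  define s where "s = Rop n c (\<lambda>k. Dl (u k)) v"
  have uvV: "\<forall>k<n. u k \<in> Vsp \<and> v k \<in> Vsp" using hom Vhom_Vsp by blast
  have s_in: "s \<in> Ralg Gb Tb X gam dg g0 b"
    unfolding Ralg_iff s_def
    by (rule exI[of _ n], rule exI[of _ c], rule exI[of _ v], rule exI[of _ "\<lambda>k. Dl (u k)"],
        rule exI[of _ av], rule exI[of _ au]) (use hom Dl_Vhom in blast)
  have s_adj: "\<forall>x\<in>Vsp. \<forall>y\<in>Vsp. formB bh (Rop n c v u x) y = formB bh x (s y)"
    using adj[OF uvV] by (simp add: s_def)
  have "(THE s. s \<in> Ralg Gb Tb X gam dg g0 b \<and> (\<forall>x\<in>Vsp. \<forall>y\<in>Vsp. formB bh (Rop n c v u x) y = formB bh x (s y))) = s"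
  proof (rule the_equality)
    show "s \<in> Ralg Gb Tb X gam dg g0 b \<and> (\<forall>x\<in>Vsp. \<forall>y\<in>Vsp. formB bh (Rop n c v u x) y = formB bh x (s y))"
      using s_in s_adj by blast
  next
    fix s' assume s': "s' \<in> Ralg Gb Tb X gam dg g0 b \<and> (\<forall>x\<in>Vsp. \<forall>y\<in>Vsp. formB bh (Rop n c v u x) y = formB bh x (s' y))"
    then obtain m c' u' v' au' av' where h': "\<forall>k<m. au' k \<in> carrier Gb \<and> av' k \<in> carrier Gb \<and>
            u' k \<in> Vhom Gb Tb X gam dg (au' k) \<and> v' k \<in> Vhom Gb Tb X gam dg (av' k)"
      and s'e: "s' = Rop m c' v' u'" unfolding Ralg_iff by blast
    have v'V: "\<forall>k<m. v' k \<in> Vsp" using h' Vhom_Vsp by blast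
    have vV: "\<forall>k<n. Dl (u k) \<in> Vsp" using uvV Dl_Vsp by blast
    show "s' = s"
    proof (rule ext)
      fix y show "s' y = s y"
      proof (cases "y \<in> Vsp")
        case True
        show ?thesis
        proof (rule nondeg)
          show "s' y \<in> Vsp" unfolding s'e by (rule Rop_Vsp[OF v'V])
          show "s y \<in> Vsp" unfolding s_def by (rule Rop_Vsp[OF vV])
          show "\<forall>x\<in>Vsp. formB bh x (s' y) = formB bh x (s y)" using s' s_adj True by simp
        qed
      next
        case False then show ?thesis by (simp add: s'e s_def Rop_nonVsp)
      qed
    qed
  qed
  then show ?thesis unfolding phiR_def bh_def[symmetric] s_def .
qed


lemma Vhom_dg: assumes u: "u \<in> Vhom Gb Tb X gam dg au" and nz: "u i \<noteq> 0" shows "au \<in> dg i"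
proof -
  obtain t c where t: "t \<in> Tb" "gam (dg i) \<otimes>\<^bsub>Gb\<^esub> t = au" using u nz by (auto simp: Vhom_def)
  show ?thesis using Q_mem[OF dg_carr[of i] gam_in[rule_format, OF dg_carr[of i]] t(1)] t(2) by simp
qed

lemma Dl_const: assumes u: "u \<in> Vhom Gb Tb X gam dg au" and au: "au \<in> dg i"
  shows "Dl u = (\<lambda>k. smat (delta (dg i)) (u k))"
proof
  fix k show "Dl u k = smat (delta (dg i)) (u k)"
  proof (cases "u k = 0")
    case True then show ?thesis by (simp add: Dl_def)
  next
    case False
    then have "au \<in> dg k" by (rule Vhom_dg[OF u])
    then have "dg k = dg i" using Q_eq[OF dg_carr dg_carr _ au] by blast
    then show ?thesis by (simp add: Dl_def)
  qed
qed

lemma scale: assumes u: "u \<in> Vhom Gb Tb X gam dg au" and v: "v \<in> Vhom Gb Tb X gam dg av"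
  and au: "au \<in> dg i" and av: "av \<in> dg j"
  shows "rop bh (Dl v) (Dl u) = opscale (delta (dg i) * delta (dg j)) (rop bh v u)"
proof -
  have di: "delta (dg i) \<noteq> 0" using delta_nz dg_carr by blast
  show ?thesis
    unfolding Dl_const[OF u au] Dl_const[OF v av] rop_def opscale_def formB_smat_l[OF di]
    by (simp add: smat_mult_l smat_mult_r smat_smat mult.commute)
qed

lemma Dl_zero: "Dl (\<lambda>i. 0) = (\<lambda>i. 0)" by (simp add: Dl_def)

definition LHS where "LHS \<longleftrightarrow> (\<forall>a\<in>carrier Gb. \<forall>r\<in>Rdeg Gb Tb X gam dg g0 b a. \<forall>g\<in>a.
             phiR Gb Tb X gam dg g0 b (phiR Gb Tb X gam dg g0 b r) = opscale ((chi g)^2) r)"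

lemma phi2: assumes hom: "\<forall>k<n. au k \<in> carrier Gb \<and> av k \<in> carrier Gb \<and>
            u k \<in> Vhom Gb Tb X gam dg (au k) \<and> v k \<in> Vhom Gb Tb X gam dg (av k)"
  shows "phiR Gb Tb X gam dg g0 b (phiR Gb Tb X gam dg g0 b (Rop n c v u)) = Rop n c (\<lambda>k. Dl (v k)) (\<lambda>k. Dl (u k))"
proof -
  have h2: "\<forall>k<n. av k \<in> carrier Gb \<and> au k \<in> carrier Gb \<and>
            v k \<in> Vhom Gb Tb X gam dg (av k) \<and> Dl (u k) \<in> Vhom Gb Tb X gam dg (au k)"
    using hom Dl_Vhom by blast
  show ?thesis unfolding phiR_Rop[OF hom] by (rule phiR_Rop[OF h2])
qed

lemma Pc_LHS: assumes P: Pc shows LHS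
  unfolding LHS_def
proof (intro ballI)
  fix a r g assume a: "a \<in> carrier Gb" and r: "r \<in> Rdeg Gb Tb X gam dg g0 b a" and g: "g \<in> a"
  obtain n c u v au av where hom: "\<forall>k<n. au k \<in> carrier Gb \<and> av k \<in> carrier Gb \<and>
            u k \<in> Vhom Gb Tb X gam dg (au k) \<and> v k \<in> Vhom Gb Tb X gam dg (av k) \<and>
            g0 \<otimes>\<^bsub>Gb\<^esub> au k \<otimes>\<^bsub>Gb\<^esub> av k = a" and re: "r = Rop n c v u"
    using r unfolding Rdeg_iff by blast
  have hom': "\<forall>k<n. au k \<in> carrier Gb \<and> av k \<in> carrier Gb \<and>
            u k \<in> Vhom Gb Tb X gam dg (au k) \<and> v k \<in> Vhom Gb Tb X gam dg (av k)" using hom by blast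
  have term_eq: "smat (c k) (rop bh (Dl (v k)) (Dl (u k)) x p) = smat ((chi g)^2) (smat (c k) (rop bh (v k) (u k) x p))"
    if k: "k < n" for k x p
  proof (cases "u k = (\<lambda>i. 0) \<or> v k = (\<lambda>i. 0)")
    case True then show ?thesis
      by (auto simp: Dl_zero rop_def formB_zero_l)
  next
    case False
    then have "\<exists>i. u k i \<noteq> 0" "\<exists>j. v k j \<noteq> 0" by auto
    then obtain i j where i: "u k i \<noteq> 0" and j: "v k j \<noteq> 0" by blast
    have uk: "u k \<in> Vhom Gb Tb X gam dg (au k)" and vk: "v k \<in> Vhom Gb Tb X gam dg (av k)" using hom k by auto
    have aui: "au k \<in> dg i" by (rule Vhom_dg[OF uk i])
    have avj: "av k \<in> dg j" by (rule Vhom_dg[OF vk j])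
    have "g \<in> g0 \<otimes>\<^bsub>Gb\<^esub> au k \<otimes>\<^bsub>Gb\<^esub> av k" using hom k g by auto
    then have dd: "delta (dg i) * delta (dg j) = (chi g)^2" using P aui avj unfolding Pc_def by blast
    show ?thesis unfolding scale[OF uk vk aui avj] dd
      by (simp add: opscale_def smat_smat mult.commute)
  qed
  show "phiR Gb Tb X gam dg g0 b (phiR Gb Tb X gam dg g0 b r) = opscale ((chi g)^2) r"
    unfolding re phi2[OF hom']
    by (rule ext, rule ext) (simp add: Rop_def opscale_def smat_sum term_eq)
qed

lemma LHS_Pc: assumes L: LHS shows Pc
  unfolding Pc_def
proof (intro allI ballI)
  fix i j au av g assume au: "au \<in> dg i" and av: "av \<in> dg j" and g: "g \<in> g0 \<otimes>\<^bsub>Gb\<^esub> au \<otimes>\<^bsub>Gb\<^esub> av"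
  obtain t1 where t1: "t1 \<in> Tb" "au = gam (dg i) \<otimes>\<^bsub>Gb\<^esub> t1"
    using Q_same[OF dg_carr[of i] gam_in[rule_format, OF dg_carr[of i]] au] by blast
  obtain t2 where t2: "t2 \<in> Tb" "av = gam (dg j) \<otimes>\<^bsub>Gb\<^esub> t2"
    using Q_same[OF dg_carr[of j] gam_in[rule_format, OF dg_carr[of j]] av] by blast
  define u where "u k = (if k = i then X t1 else 0)" for k
  define v where "v k = (if k = j then X t2 else 0)" for k
  have X1: "X t1 \<noteq> 0" "X t2 \<noteq> 0" using X_inv t1 t2 invertible_ne0 by blast+
  have uV: "u \<in> Vhom Gb Tb X gam dg au"
  proof -
    have "{k. u k \<noteq> 0} \<subseteq> {i}" by (auto simp: u_def)
    then have "u \<in> Vsp" unfolding Vsp_fin using finite_subset by blast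
    moreover have "u k = 0 \<or> (\<exists>t\<in>Tb. \<exists>c. gam (dg k) \<otimes>\<^bsub>Gb\<^esub> t = au \<and> u k = smat c (X t))" for k
      using t1 by (cases "k = i") (auto simp: u_def intro!: bexI[of _ t1] exI[of _ 1])
    ultimately show ?thesis by (simp add: Vhom_def)
  qed
  have vV: "v \<in> Vhom Gb Tb X gam dg av"
  proof -
    have "{k. v k \<noteq> 0} \<subseteq> {j}" by (auto simp: v_def)
    then have "v \<in> Vsp" unfolding Vsp_fin using finite_subset by blast
    moreover have "v k = 0 \<or> (\<exists>t\<in>Tb. \<exists>c. gam (dg k) \<otimes>\<^bsub>Gb\<^esub> t = av \<and> v k = smat c (X t))" for k
      using t2 by (cases "k = j") (auto simp: v_def intro!: bexI[of _ t2] exI[of _ 1])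
    ultimately show ?thesis by (simp add: Vhom_def)
  qed
  have auc: "au \<in> carrier Gb" "av \<in> carrier Gb" using au av dgel_carr by auto
  define a where "a = g0 \<otimes>\<^bsub>Gb\<^esub> au \<otimes>\<^bsub>Gb\<^esub> av"
  have ac: "a \<in> carrier Gb" using auc g0_in by (simp add: a_def)
  have hom: "\<forall>k<(1::nat). (\<lambda>_. au) k \<in> carrier Gb \<and> (\<lambda>_. av) k \<in> carrier Gb \<and>
            (\<lambda>_. u) k \<in> Vhom Gb Tb X gam dg ((\<lambda>_. au) k) \<and> (\<lambda>_. v) k \<in> Vhom Gb Tb X gam dg ((\<lambda>_. av) k)"
    using auc uV vV by simp
  define r where "r = Rop 1 (\<lambda>_. 1) (\<lambda>_. v) (\<lambda>_. u)"
  have rR: "r \<in> Rdeg Gb Tb X gam dg g0 b a"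
    unfolding Rdeg_iff r_def
    by (rule exI[of _ 1], rule exI[of _ "\<lambda>_. 1"], rule exI[of _ "\<lambda>_. u"], rule exI[of _ "\<lambda>_. v"],
        rule exI[of _ "\<lambda>_. au"], rule exI[of _ "\<lambda>_. av"]) (use auc uV vV in \<open>simp add: a_def\<close>)
  have ga: "g \<in> a" using g by (simp add: a_def)
  have e1: "phiR Gb Tb X gam dg g0 b (phiR Gb Tb X gam dg g0 b r) = opscale ((chi g)^2) r"
    using L ac rR ga unfolding LHS_def by blast
  have e2: "phiR Gb Tb X gam dg g0 b (phiR Gb Tb X gam dg g0 b r) = opscale (delta (dg i) * delta (dg j)) (rop bh v u)"
    unfolding r_def phi2[OF hom] by (simp add: Rop_def scale[OF uV vV au av] opscale_def)
  have e3: "r = rop bh v u" by (simp add: r_def Rop_def)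
  obtain i' where i': "b i i' \<noteq> 0" using ex_dual by blast
  define x where "x k = (if k = i' then mat 1 else 0 :: 'f^'n^'n)" for k
  have eqm: "smat (delta (dg i) * delta (dg j)) (rop bh v u x j) = smat ((chi g)^2) (rop bh v u x j)"
    using e1 e2 e3 by (metis opscale_def)
  have su: "{k. u k \<noteq> 0} = {i}" using X1 by (auto simp: u_def)
  have m1: "(mat 1 :: 'f^'n^'n) \<noteq> 0" using invertible_ne0[OF invertible_mat1] .
  have sx: "{k. x k \<noteq> 0} = {i'}" using m1 by (auto simp: x_def)
  have "rop bh v u x j = X t2 ** (transpose (X t1) ** bh i i' ** mat 1)"
    unfolding rop_def formB_def su sx by (simp add: v_def u_def x_def)
  also have "\<dots> = X t2 ** (smat (beta t1) (X t1) ** smat (b i i') (Nm i))"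
    using X_transp t1 by (simp add: bh_eq)
  finally have rv: "rop bh v u x j = X t2 ** (smat (beta t1) (X t1) ** smat (b i i') (Nm i))" .
  have bt: "beta t1 \<noteq> 0" using beta_pm t1 by fastforce
  have "invertible (X t2 ** (smat (beta t1) (X t1) ** smat (b i i') (Nm i)))"
    using X_inv t1 t2 bt i' Nm_inv by (intro invertible_mult invertible_smat) auto
  then have "rop bh v u x j \<noteq> 0" using rv invertible_ne0 by simp
  then show "delta (dg i) * delta (dg j) = (chi g)^2" using smat_eq_cancel eqm by blast
qed

lemma aux_sd: fixes m c m0 s :: 'f
  assumes m: "m \<noteq> 0" and c: "c \<noteq> 0" and m0: "m0 \<noteq> 0" and s: "s * s = 1"
  shows "(m = m0 / c * s) \<longleftrightarrow> 1 / (m * s) = c / m0"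
proof -
  have s0: "s \<noteq> 0" using s by auto
  have "1 / (m * s) = c / m0 \<longleftrightarrow> m * s = m0 / c"
    using m c m0 s0 by (auto simp: field_simps)
  also have "\<dots> \<longleftrightarrow> m = m0 / c * s"
  proof
    assume "m * s = m0 / c"
    then have "m * s * s = m0 / c * s" by simp
    then show "m = m0 / c * s" using s by (simp add: mult.assoc)
  next
    assume "m = m0 / c * s"
    then have "m * s = m0 / c * (s * s)" by (simp add: mult.assoc)
    then show "m * s = m0 / c" using s by simp
  qed
  finally show ?thesis by simp
qed

lemma aux_nsd: fixes m c m0 :: 'f
  assumes m: "m \<noteq> 0" and c: "c \<noteq> 0" and m0: "m0 \<noteq> 0"
  shows "(m = m0 / c) \<longleftrightarrow> 1 / m = c / m0"
  using m c m0 by (auto simp: field_simps)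

lemma mu_delta: assumes A: "A \<in> carrier Q" and gc: "g \<in> carrier G" and m0: "mu0 \<noteq> 0"
  shows "(mu A = (if sd A then mu0 / (chi g)^2 * beta (tau A) else mu0 / (chi g)^2))
     \<longleftrightarrow> delta A = (chi g)^2 / mu0"
proof -
  have cg: "(chi g)^2 \<noteq> 0" using chi_nz gc by simp
  have mA: "mu A \<noteq> 0" using mu_nz A by blast
  show ?thesis
  proof (cases "sd A")
    case True
    show ?thesis using aux_sd[OF mA cg m0 beta_tau_sq[OF A True]] True by (simp add: delta_def)
  next
    case False then show ?thesis using aux_nsd[OF mA cg m0] by (simp add: delta_def)
  qed
qed

theorem main:
  "LHS \<longleftrightarrow>
   ((G\<lparr>carrier := \<Union>Tb\<rparr>) \<cong> ((Gb\<lparr>carrier := Tb\<rparr>) \<times>\<times> (G\<lparr>carrier := H\<rparr>)) \<and>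
    (\<exists>mu0::'f. mu0 \<noteq> 0 \<and>
      (\<forall>A\<in>dg ` UNIV. \<forall>a\<in>A. \<forall>g\<in>a.
         mu A = (if g0c \<otimes>\<^bsub>Q\<^esub> A \<otimes>\<^bsub>Q\<^esub> A = \<one>\<^bsub>Q\<^esub>
                 then mu0 / (chi g)^2 * beta (g0 \<otimes>\<^bsub>Gb\<^esub> gam A \<otimes>\<^bsub>Gb\<^esub> gam A)
                 else mu0 / (chi g)^2))))"
  (is "_ \<longleftrightarrow> ?I \<and> ?M")
proof -
  have pw: "(mu A = (if g0c \<otimes>\<^bsub>Q\<^esub> A \<otimes>\<^bsub>Q\<^esub> A = \<one>\<^bsub>Q\<^esub>
                 then mu0 / (chi g)^2 * beta (g0 \<otimes>\<^bsub>Gb\<^esub> gam A \<otimes>\<^bsub>Gb\<^esub> gam A)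
                 else mu0 / (chi g)^2)) \<longleftrightarrow> delta A = (chi g)^2 / mu0"
    if m0: "mu0 \<noteq> 0" and A: "A \<in> dg ` UNIV" and a: "a \<in> A" and g: "g \<in> a" for mu0 A a g
  proof -
    obtain i where Ai: "A = dg i" using A by blast
    have Ac: "A \<in> carrier Q" using Ai dg_carr by simp
    have "a \<in> dg i" using a Ai by simp
    then have "a \<in> carrier Gb" by (rule dgel_carr)
    then have gc: "g \<in> carrier G" using Gb_elem_carr g by blast
    show ?thesis using mu_delta[OF Ac gc m0] unfolding sd_def tau_def .
  qed
  have MM: "?M \<longleftrightarrow> Mc"
  proof
    assume ?M
    then obtain mu0 where m0: "mu0 \<noteq> 0" and h: "\<forall>A\<in>dg ` UNIV. \<forall>a\<in>A. \<forall>g\<in>a.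
         mu A = (if g0c \<otimes>\<^bsub>Q\<^esub> A \<otimes>\<^bsub>Q\<^esub> A = \<one>\<^bsub>Q\<^esub>
                 then mu0 / (chi g)^2 * beta (g0 \<otimes>\<^bsub>Gb\<^esub> gam A \<otimes>\<^bsub>Gb\<^esub> gam A)
                 else mu0 / (chi g)^2)" by (elim exE conjE)
    have "\<forall>A\<in>dg ` UNIV. \<forall>a\<in>A. \<forall>g\<in>a. delta A = (chi g)^2 / mu0"
    proof (intro ballI)
      fix A a g assume A: "A \<in> dg ` UNIV" and a: "a \<in> A" and g: "g \<in> a"
      show "delta A = (chi g)^2 / mu0" using pw[OF m0 A a g] h A a g by blast
    qed
    then show Mc unfolding Mc_def using m0 by blast
  next
    assume Mc
    then obtain mu0 where m0: "mu0 \<noteq> 0" and h: "\<forall>A\<in>dg ` UNIV. \<forall>a\<in>A. \<forall>g\<in>a. delta A = (chi g)^2 / mu0"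
      unfolding Mc_def by (elim exE conjE)
    have "\<forall>A\<in>dg ` UNIV. \<forall>a\<in>A. \<forall>g\<in>a.
         mu A = (if g0c \<otimes>\<^bsub>Q\<^esub> A \<otimes>\<^bsub>Q\<^esub> A = \<one>\<^bsub>Q\<^esub>
                 then mu0 / (chi g)^2 * beta (g0 \<otimes>\<^bsub>Gb\<^esub> gam A \<otimes>\<^bsub>Gb\<^esub> gam A)
                 else mu0 / (chi g)^2)"
    proof (intro ballI)
      fix A a g assume A: "A \<in> dg ` UNIV" and a: "a \<in> A" and g: "g \<in> a"
      show "mu A = (if g0c \<otimes>\<^bsub>Q\<^esub> A \<otimes>\<^bsub>Q\<^esub> A = \<one>\<^bsub>Q\<^esub>
                 then mu0 / (chi g)^2 * beta (g0 \<otimes>\<^bsub>Gb\<^esub> gam A \<otimes>\<^bsub>Gb\<^esub> gam A)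
                 else mu0 / (chi g)^2)" using pw[OF m0 A a g] h A a g by blast
    qed
    then show ?M using m0 by blast
  qed
  show ?thesis
  proof
    assume LHS
    then have P: Pc by (rule LHS_Pc)
    show "?I \<and> ?M" using triv_iso[OF Pc_triv[OF P]] Pc_Mc[OF P] MM by blast
  next
    assume "?I \<and> ?M"
    then have "Pc" using Mc_Pc[OF iso_triv] MM by blast
    then show LHS by (rule Pc_LHS)
  qed
qed

end

theorem proposition5p1:
  fixes G :: "('g, 'z) monoid_scheme"
    and h :: 'g
    and chi :: "'g \<Rightarrow> 'f::field"
    and Tb :: "'g set set"
    and X :: "'g set \<Rightarrow> 'f^'n^'n"
    and beta :: "'g set \<Rightarrow> 'f"
    and g0 :: "'g set"
    and dg :: "'i \<Rightarrow> 'g set set"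
    and b :: "'i \<Rightarrow> 'i \<Rightarrow> 'f"
    and mu :: "'g set set \<Rightarrow> 'f"
    and gam :: "'g set set \<Rightarrow> 'g set"
  defines "H \<equiv> {\<one>\<^bsub>G\<^esub>, h}"
  defines "Gb \<equiv> G Mod H"
  defines "Q \<equiv> Gb Mod Tb"
  defines "g0c \<equiv> Tb #>\<^bsub>Gb\<^esub> g0"
  assumes F_closed: "alg_closed TYPE('f)"
    and F_char: "(2::'f) \<noteq> 0"
    and G_ab: "comm_group G"
    and h_in: "h \<in> carrier G" and h_ord: "h \<noteq> \<one>\<^bsub>G\<^esub>" "h \<otimes>\<^bsub>G\<^esub> h = \<one>\<^bsub>G\<^esub>"
    and chi_nz: "\<forall>a\<in>carrier G. chi a \<noteq> 0"
    and chi_mult: "\<forall>a\<in>carrier G. \<forall>c\<in>carrier G. chi (a \<otimes>\<^bsub>G\<^esub> c) = chi a * chi c"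
    and chi_h: "chi h = -1"
    (* the graded division algebra D = M_l(F), l = CARD('n), support Tb *)
    and Tb_sub: "subgroup Tb Gb"
    and Tb_el2: "\<forall>t\<in>Tb. t \<otimes>\<^bsub>Gb\<^esub> t = \<one>\<^bsub>Gb\<^esub>"
    and X_indep: "\<forall>c. (\<Sum>t\<in>Tb. smat (c t) (X t)) = 0 \<longrightarrow> (\<forall>t\<in>Tb. c t = 0)"
    and X_span: "\<forall>M::'f^'n^'n. \<exists>c. M = (\<Sum>t\<in>Tb. smat (c t) (X t))"
    and X_graded: "\<forall>s\<in>Tb. \<forall>t\<in>Tb. \<exists>c. X s ** X t = smat c (X (s \<otimes>\<^bsub>Gb\<^esub> t))"
    and X_inv: "\<forall>t\<in>Tb. invertible (X t)"
    and X_transp: "\<forall>t\<in>Tb. transpose (X t) = smat (beta t) (X t)"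
    and beta_pm: "\<forall>t\<in>Tb. beta t = 1 \<or> beta t = -1"
    (* g0, the graded space V~ (homogeneous basis e_i of degree dg i) and the form B~ *)
    and g0_in: "g0 \<in> carrier Gb"
    and dg_in: "\<forall>i. dg i \<in> carrier Q"
    and b_supp: "\<forall>i j. b i j \<noteq> 0 \<longrightarrow> g0c \<otimes>\<^bsub>Q\<^esub> dg i \<otimes>\<^bsub>Q\<^esub> dg j = \<one>\<^bsub>Q\<^esub>"
    and b_nondeg: "\<forall>c::'i \<Rightarrow> 'f. finite {i. c i \<noteq> 0} \<and> (\<exists>i. c i \<noteq> 0) \<longrightarrow>
                      (\<exists>j. (\<Sum>i\<in>{i. c i \<noteq> 0}. c i * b i j) \<noteq> 0)"
    and mu_nz: "\<forall>A\<in>carrier Q. mu A \<noteq> 0"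
    and b_mu: "\<forall>i j. dg j = inv\<^bsub>Q\<^esub> (g0c \<otimes>\<^bsub>Q\<^esub> dg i) \<longrightarrow> b j i = mu (dg i) * b i j"
    (* the choice of gamma *)
    and gam_in: "\<forall>A\<in>carrier Q. gam A \<in> A"
    and gam_rel: "\<forall>A\<in>carrier Q. g0c \<otimes>\<^bsub>Q\<^esub> A \<otimes>\<^bsub>Q\<^esub> A \<noteq> \<one>\<^bsub>Q\<^esub> \<longrightarrow>
                    g0 \<otimes>\<^bsub>Gb\<^esub> gam A \<otimes>\<^bsub>Gb\<^esub> gam (inv\<^bsub>Q\<^esub> (g0c \<otimes>\<^bsub>Q\<^esub> A)) = \<one>\<^bsub>Gb\<^esub>"
  shows "(\<forall>a\<in>carrier Gb. \<forall>r\<in>Rdeg Gb Tb X gam dg g0 b a. \<forall>g\<in>a.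
             phiR Gb Tb X gam dg g0 b (phiR Gb Tb X gam dg g0 b r) = opscale ((chi g)^2) r)
         \<longleftrightarrow>
         ((G\<lparr>carrier := \<Union>Tb\<rparr>) \<cong> ((Gb\<lparr>carrier := Tb\<rparr>) \<times>\<times> (G\<lparr>carrier := H\<rparr>)) \<and>
          (\<exists>mu0::'f. mu0 \<noteq> 0 \<and>
            (\<forall>A\<in>dg ` UNIV. \<forall>a\<in>A. \<forall>g\<in>a.
               mu A = (if g0c \<otimes>\<^bsub>Q\<^esub> A \<otimes>\<^bsub>Q\<^esub> A = \<one>\<^bsub>Q\<^esub>
                       then mu0 / (chi g)^2 * beta (g0 \<otimes>\<^bsub>Gb\<^esub> gam A \<otimes>\<^bsub>Gb\<^esub> gam A)
                       else mu0 / (chi g)^2))))"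
proof -
  have loc: "P51 G h chi Tb X beta g0 dg b mu gam H Gb Q g0c"
    by (rule P51.intro[OF H_def[THEN meta_eq_to_obj_eq] Gb_def[THEN meta_eq_to_obj_eq]
          Q_def[THEN meta_eq_to_obj_eq] g0c_def[THEN meta_eq_to_obj_eq] F_char G_ab h_in h_ord(1) h_ord(2)
          chi_nz chi_mult chi_h Tb_sub Tb_el2 X_inv X_transp beta_pm g0_in dg_in b_supp b_nondeg
          mu_nz b_mu gam_in])
  interpret P: P51 G h chi Tb X beta g0 dg b mu gam H Gb Q g0c by (rule loc)
  show ?thesis using P.main unfolding P.LHS_def .
qed

end
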